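(* Let $m>1$, $l>1$ with $1/m+1/l=1$, and let $f:[0,1]\to[0,1]$ be the skew tent map $f(x)=mx$ for $0\le x\le 1/m$, $f(x)=l(1-x)$ for $1/m<x\le1$ (for which Lebesgue measure is the unique absolutely continuous invariant probability measure and is ergodic). Then $H(f)=\lambda(f)+D(f)$ with $\lambda(f)=\frac1m\log m+\frac1l\log l$ and: (1) if $m=2$, $D(f)=0$; (2) if $m$ is rational, $m\ne2$, written $m=(p+q)/p$ in lowest terms with integers $p,q\ge1$, then $$D(f)=\frac{2p}{(p+q)^2}\sum_{n=1}^{p-1}\phi\Big(\frac np\Big)+\frac{2q}{(p+q)^2}\sum_{n=1}^{q-1}\phi\Big(\frac nq\Big)$$ (an empty sum being $0$); (3) if $m$ is irrational, $D(f)=\dfrac{m^2-2m+2}{2m^2}$.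
   Context: $\phi(t)=-t\log t$ ($t>0$), $\phi(0)=0$. For an equivolume partition $\Delta=\{A^{(1)},\dots,A^{(N)}\}$ of $[0,1]$ into pairwise disjoint subintervals of Lebesgue measure $1/N$, set $p_\Delta(n'|n)=N\,\mathrm{Leb}(f^{-1}(A^{(n')})\cap A^{(n)})$ and $H_\Delta(f)=\sum_{n,n'}\frac1N\phi(p_\Delta(n'|n))$; $H(f)$ denotes $\lim_{N\to\infty}H_\Delta(f)$ over equivolume partitions with $N$ cells (the limit exists), and $\lambda(f)=\int_0^1\log|f'(x)|\,dx$. *)

theory Defs
  imports "HOL-Analysis.Analysis"
begin

definition phi :: "real \<Rightarrow> real" where
  "phi t = (if t = 0 then 0 else - t * ln t)"

definition equivolume_partition :: "nat \<Rightarrow> (nat \<Rightarrow> real set) \<Rightarrow> bool" where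
  "equivolume_partition N A \<longleftrightarrow>
     (\<forall>n<N. is_interval (A n) \<and> A n \<subseteq> {0..1} \<and> A n \<in> sets lebesgue
            \<and> measure lebesgue (A n) = 1 / real N)
   \<and> (\<forall>n<N. \<forall>n'<N. n \<noteq> n' \<longrightarrow> A n \<inter> A n' = {})
   \<and> (\<Union>n<N. A n) = {0..1}"

definition trans_prob :: "nat \<Rightarrow> (nat \<Rightarrow> real set) \<Rightarrow> (real \<Rightarrow> real) \<Rightarrow> nat \<Rightarrow> nat \<Rightarrow> real" where
  "trans_prob N A f n n' = real N * measure lebesgue (f -` A n' \<inter> A n)"

definition H_part :: "nat \<Rightarrow> (nat \<Rightarrow> real set) \<Rightarrow> (real \<Rightarrow> real) \<Rightarrow> real" where
  "H_part N A f = (\<Sum>n<N. \<Sum>n'<N. (1 / real N) * phi (trans_prob N A f n n'))"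

definition H_limit :: "(real \<Rightarrow> real) \<Rightarrow> real \<Rightarrow> bool" where
  "H_limit f L \<longleftrightarrow>
     (\<forall>\<Delta> :: nat \<Rightarrow> nat \<Rightarrow> real set.
        (\<forall>N\<ge>1. equivolume_partition N (\<Delta> N)) \<longrightarrow>
        (\<lambda>N. H_part N (\<Delta> N) f) \<longlonglongrightarrow> L)"

definition lyap :: "(real \<Rightarrow> real) \<Rightarrow> real" where
  "lyap f = integral {0..1} (\<lambda>x. ln \<bar>deriv f x\<bar>)"

end

theory Submission
  imports Defs "HOL-Real_Asymp.Real_Asymp"
begin


lemma sum_split_add: "(\<Sum>i<m+n. (a::nat\<Rightarrow>real) i) = (\<Sum>i<m. a i) + (\<Sum>j<n. a (m+j))"
  by (induction n) auto

lemma block_bound: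
  fixes a :: "nat \<Rightarrow> real"
  assumes k: "k > 0" and blk: "\<And>n0. \<bar>(\<Sum>j<k. a (n0+j)) - k*c\<bar> \<le> k*e"
    and M: "\<And>i. \<bar>a i\<bar> \<le> M" and cM: "\<bar>c\<bar> \<le> M" and e: "e \<ge> 0"
  shows "\<bar>(\<Sum>i<L. a i) - L*c\<bar> \<le> L*e + 2*real k*M"
proof (induction L rule: less_induct)
  case (less L)
  have M0: "M \<ge> 0" using cM by linarith
  show ?case
  proof (cases "L < k")
    case True
    have "\<bar>(\<Sum>i<L. a i)\<bar> \<le> (\<Sum>i<L. \<bar>a i\<bar>)" by (rule sum_abs)
    also have "\<dots> \<le> (\<Sum>i<L. M)" by (rule sum_mono) (rule M)
    finally have s: "\<bar>(\<Sum>i<L. a i)\<bar> \<le> L*M" by simp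
    have "\<bar>L*c\<bar> \<le> L*M" using cM by (simp add: abs_mult mult_left_mono)
    moreover have "real L * M \<le> k*M" using True M0 by (simp add: mult_right_mono)
    moreover have "0 \<le> real L * e" using e by simp
    moreover have "\<bar>(\<Sum>i<L. a i) - L*c\<bar> \<le> \<bar>(\<Sum>i<L. a i)\<bar> + \<bar>L*c\<bar>" by (rule abs_triangle_ineq4)
    ultimately show ?thesis using s by linarith
  next
    case False
    then obtain L' where L: "L = L' + k" by (metis add.commute le_add_diff_inverse not_less)
    have IH: "\<bar>(\<Sum>i<L'. a i) - L'*c\<bar> \<le> L'*e + 2*real k*M" using less L k by simp
    have "(\<Sum>i<L. a i) = (\<Sum>i<L'. a i) + (\<Sum>j<k. a (L'+j))" unfolding L by (rule sum_split_add)
    moreover have "real L * c = L'*c + k*c" "real L * e = L'*e + k*e" unfolding L by (simp_all add: algebra_simps)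
    ultimately show ?thesis using IH blk[of L'] by linarith
  qed
qed

lemma cesaro_blocks:
  fixes a :: "nat \<Rightarrow> real"
  assumes blk: "\<And>e. e > 0 \<Longrightarrow> \<exists>k>0. \<forall>n0. \<bar>(\<Sum>j<k. a (n0+j)) - k*c\<bar> \<le> k*e"
    and M: "\<And>i. \<bar>a i\<bar> \<le> M" and cM: "\<bar>c\<bar> \<le> M"
  shows "(\<lambda>L. (\<Sum>i<L. a i) / L) \<longlonglongrightarrow> c"
proof (rule LIMSEQ_I)
  fix r :: real assume r: "r > 0"
  obtain k where k: "k > 0" and kb: "\<forall>n0. \<bar>(\<Sum>j<k. a (n0+j)) - k*c\<bar> \<le> k*(r/2)"
    using blk[of "r/2"] r by auto
  have M0: "M \<ge> 0" using cM by linarith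
  obtain no :: nat where no: "real no > 4*real k*M/r + 1" using reals_Archimedean2 by blast
  show "\<exists>no. \<forall>L\<ge>no. norm ((\<Sum>i<L. a i) / L - c) < r"
  proof (intro exI allI impI)
    fix L assume L: "L \<ge> no"
    have "4*real k*M/r \<ge> 0" using M0 r by simp
    hence Lpos: "real L > 0" using L no by linarith
    have b: "\<bar>(\<Sum>i<L. a i) - L*c\<bar> \<le> L*(r/2) + 2*real k*M"
      by (rule block_bound[OF k _ M cM]) (use kb r in auto)
    have "(\<Sum>i<L. a i) / L - c = ((\<Sum>i<L. a i) - L*c) / L" using Lpos by (simp add: field_simps)
    hence "norm ((\<Sum>i<L. a i) / L - c) = \<bar>(\<Sum>i<L. a i) - L*c\<bar> / L" using Lpos by simp
    also have "\<dots> \<le> (L*(r/2) + 2*real k*M) / L" using b Lpos by (simp add: divide_right_mono)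
    also have "\<dots> = r/2 + 2*real k*M/L" using Lpos by (simp add: field_simps)
    also have "2*real k*M/L < r/2"
    proof -
      have "real L > 4*real k*M/r" using L no by linarith
      hence "real L * r > 4*real k*M" using r by (simp add: field_simps)
      thus ?thesis using Lpos r by (simp add: field_simps)
    qed
    finally show "norm ((\<Sum>i<L. a i) / L - c) < r" by linarith
  qed
qed


lemma unif_frac:
  fixes G :: "real \<Rightarrow> real"
  assumes cont: "continuous_on {0..1} G" and G01: "G 0 = G 1" and e: "e > 0"
  shows "\<exists>d>0. d \<le> 1 \<and> (\<forall>s\<in>{0..1}. \<forall>t\<in>{0..1}. \<bar>s - t\<bar> < d \<longrightarrow> \<bar>G s - G t\<bar> < e)
     \<and> (\<forall>x y. \<bar>x - y\<bar> < d \<longrightarrow> \<bar>G (frac x) - G (frac y)\<bar> < e)"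
proof -
  have "uniformly_continuous_on {0..1} G"
    using cont by (simp add: compact_uniformly_continuous)
  then obtain d0 where d0: "d0 > 0" and
    uc: "\<And>s t. s \<in> {0..1} \<Longrightarrow> t \<in> {0..1} \<Longrightarrow> dist t s < d0 \<Longrightarrow> dist (G t) (G s) < e/2"
    unfolding uniformly_continuous_on_def using e by (metis half_gt_zero)
  define d where "d = min d0 1"
  have uc': "\<bar>G s - G t\<bar> < e/2" if "s \<in> {0..1}" "t \<in> {0..1}" "\<bar>s - t\<bar> < d" for s t
    using uc[OF that(2,1)] that(3) by (simp add: d_def dist_real_def)
  have fr: "frac z \<in> {0..1}" for z :: real using frac_lt_1[of z] by simp
  have "\<bar>G (frac x) - G (frac y)\<bar> < e" if xy: "\<bar>x - y\<bar> < d" for x y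
  proof -
    define X where "X = \<lfloor>x\<rfloor>"
    define Y where "Y = \<lfloor>y\<rfloor>"
    have x: "x = of_int X + frac x" and y: "y = of_int Y + frac y" by (simp_all add: frac_def X_def Y_def)
    have fx: "0 \<le> frac x" "frac x < 1" and fy: "0 \<le> frac y" "frac y < 1" using frac_lt_1 by auto
    have "\<bar>x - y\<bar> < 1" using xy by (simp add: d_def)
    hence "\<bar>real_of_int (Y - X)\<bar> < 2" using x y fx fy by linarith
    hence "\<bar>Y - X\<bar> < 2" by linarith
    hence "Y - X = 0 \<or> Y - X = 1 \<or> Y - X = -1" by linarith
    moreover {
      assume "Y - X = 0"
      hence "real_of_int Y = real_of_int X" by simp
      hence "\<bar>frac x - frac y\<bar> < d" using x y xy by linarith
      hence "\<bar>G (frac x) - G (frac y)\<bar> < e/2" using uc'[OF fr fr] by blast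
      hence ?thesis using e by linarith
    } moreover {
      assume h: "Y - X = 1"
      hence "real_of_int Y = real_of_int X + 1" by linarith
      hence "y - x = 1 + frac y - frac x" using x y by linarith
      hence a: "\<bar>frac x - 1\<bar> < d" "\<bar>frac y - 0\<bar> < d" using xy fx fy by linarith+
      have "\<bar>G (frac x) - G 1\<bar> < e/2" using uc'[OF fr _ a(1)] by simp
      moreover have "\<bar>G (frac y) - G 0\<bar> < e/2" using uc'[OF fr _ a(2)] by simp
      ultimately have ?thesis using G01 by linarith
    } moreover {
      assume h: "Y - X = -1"
      hence "real_of_int X = real_of_int Y + 1" by linarith
      hence "x - y = 1 + frac x - frac y" using x y by linarith
      hence a: "\<bar>frac y - 1\<bar> < d" "\<bar>frac x - 0\<bar> < d" using xy fx fy by linarith+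
      have "\<bar>G (frac y) - G 1\<bar> < e/2" using uc'[OF fr _ a(1)] by simp
      moreover have "\<bar>G (frac x) - G 0\<bar> < e/2" using uc'[OF fr _ a(2)] by simp
      ultimately have ?thesis using G01 by linarith
    }
    ultimately show ?thesis by blast
  qed
  moreover have "\<forall>s\<in>{0..1}. \<forall>t\<in>{0..1}. \<bar>s - t\<bar> < d \<longrightarrow> \<bar>G s - G t\<bar> < e"
    using uc' e by fastforce
  moreover have "d > 0" "d \<le> 1" using d0 by (auto simp: d_def)
  ultimately show ?thesis by blast
qed

lemma perm_sum_frac:
  fixes G :: "real \<Rightarrow> real" and h r :: int and k :: nat
  assumes k: "k > 0" and cop: "coprime h (int k)"
  shows "(\<Sum>j<k. G (frac (y + real_of_int (h * int j + r) / real k))) = (\<Sum>j<k. G (frac (y + j / k)))"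
proof -
  define \<sigma> where "\<sigma> j = nat ((h * int j + r) mod int k)" for j :: nat
  have eq: "frac (y + real_of_int (h * int j + r) / real k) = frac (y + \<sigma> j / k)" for j :: nat
  proof -
    have "h * int j + r = int k * ((h * int j + r) div int k) + (h * int j + r) mod int k"
      by simp
    moreover have "(h * int j + r) mod int k \<ge> 0" using k by simp
    ultimately have "real_of_int (h * int j + r) = real k * of_int ((h * int j + r) div int k) + real (\<sigma> j)"
      unfolding \<sigma>_def by (metis of_int_add of_int_mult of_int_of_nat_eq of_nat_nat)
    hence "real_of_int (h * int j + r) / k = of_int ((h * int j + r) div int k) + real (\<sigma> j) / k"
      using k by (simp add: field_simps)
    hence "y + real_of_int (h * int j + r) / real k = (y + \<sigma> j / k) + of_int ((h * int j + r) div int k)" by simp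
    thus ?thesis by (metis frac_add_of_int_right)
  qed
  have inj: "inj_on \<sigma> {..<k}"
  proof (rule inj_onI)
    fix a b assume a: "a \<in> {..<k}" and b: "b \<in> {..<k}" and ab: "\<sigma> a = \<sigma> b"
    have "(h * int a + r) mod int k = (h * int b + r) mod int k"
      using ab k unfolding \<sigma>_def by (metis int_nat_eq mod_int_pos_iff of_nat_0_less_iff)
    hence "int k dvd (h * int a + r) - (h * int b + r)" by (simp add: mod_eq_dvd_iff)
    hence "int k dvd h * (int a - int b)" by (simp add: algebra_simps)
    hence "int k dvd (int a - int b)" using cop by (metis coprime_commute coprime_dvd_mult_right_iff)
    moreover have "\<bar>int a - int b\<bar> < int k" using a b by auto
    ultimately have "int a - int b = 0" using dvd_imp_le_int[of "int a - int b" "int k"] by fastforce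
    thus "a = b" by simp
  qed
  have sub: "\<sigma> ` {..<k} \<subseteq> {..<k}"
    using k by (auto simp: \<sigma>_def nat_less_iff)
  have bij: "bij_betw \<sigma> {..<k} {..<k}"
    unfolding bij_betw_def using inj sub endo_inj_surj[of "{..<k}" \<sigma>] by auto
  have "(\<Sum>j<k. G (frac (y + real_of_int (h * int j + r) / real k))) = (\<Sum>j<k. G (frac (y + \<sigma> j / k)))"
    by (rule sum.cong[OF refl], rule arg_cong[where f=G], rule eq)
  also have "\<dots> = (\<Sum>j<k. G (frac (y + j / k)))"
    by (rule sum.reindex_bij_betw[OF bij, where g="\<lambda>j. G (frac (y + j / k))"])
  finally show ?thesis .
qed


lemma bound_G:
  fixes G :: "real \<Rightarrow> real"
  assumes cont: "continuous_on {0..1} G"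
  obtains M where "\<And>s. s \<in> {0..1} \<Longrightarrow> \<bar>G s\<bar> \<le> M" "\<bar>integral {0..1} G\<bar> \<le> M"
proof -
  have "bounded (G ` {0..1})" by (rule compact_imp_bounded[OF compact_continuous_image[OF cont compact_Icc]])
  then obtain M where "\<forall>x\<in>G ` {0..1}. norm x \<le> M" unfolding bounded_iff by blast
  hence M: "\<And>s. s \<in> {0..1} \<Longrightarrow> \<bar>G s\<bar> \<le> M" by auto
  have "norm (integral {0..1} G) \<le> M * (1 - 0)" by (rule integral_bound) (use cont M in auto)
  thus ?thesis using that M by auto
qed

lemma riemann:
  fixes G :: "real \<Rightarrow> real" and k :: nat and e :: real
  assumes cont: "continuous_on {0..1} G" and k: "k > 0" and e: "e \<ge> 0"
    and close: "\<And>s t. s \<in> {0..1} \<Longrightarrow> t \<in> {0..1} \<Longrightarrow> \<bar>s - t\<bar> \<le> 1/k \<Longrightarrow> \<bar>G s - G t\<bar> \<le> e"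
  shows "\<bar>(\<Sum>j<k. G (j/k)) - k * integral {0..1} G\<bar> \<le> k*e"
proof -
  have kr: "real k > 0" using k by simp
  have split: "integral {0..real n/k} G = (\<Sum>j<n. integral {real j/k..real (Suc j)/k} G)" if "n \<le> k" for n
    using that
  proof (induction n)
    case 0 then show ?case by simp
  next
    case (Suc n)
    have le: "real (Suc n) / k \<le> 1" using Suc.prems kr by (simp add: field_simps)
    have int: "G integrable_on {0..real (Suc n)/k}"
      by (rule integrable_continuous_real, rule continuous_on_subset[OF cont]) (use le in auto)
    have "integral {0..real n/k} G + integral {real n/k..real (Suc n)/k} G = integral {0..real (Suc n)/k} G"
      by (rule Henstock_Kurzweil_Integration.integral_combine) (use kr int in \<open>auto simp: field_simps\<close>)
    then show ?case using Suc by simp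
  qed
  have piece: "\<bar>integral {real j/k..real (Suc j)/k} G - G (j/k) / k\<bar> \<le> e / k" if j: "j < k" for j
  proof -
    define a where "a = real j / k"
    define b where "b = real (Suc j) / k"
    have ab: "a \<le> b" "b - a = 1/k" "0 \<le> a" "b \<le> 1" using j kr by (auto simp: a_def b_def field_simps)
    have sub: "{a..b} \<subseteq> {0..1}" using ab by auto
    have cab: "continuous_on {a..b} G" using continuous_on_subset[OF cont sub] .
    have "norm (integral {a..b} (\<lambda>t. G t - G a)) \<le> e * (b - a)"
    proof (rule integral_bound)
      show "a \<le> b" by fact
      show "continuous_on {a..b} (\<lambda>t. G t - G a)" using cab by (intro continuous_intros)
      fix t assume t: "t \<in> {a..b}"
      hence "\<bar>t - a\<bar> \<le> 1/k" using ab by auto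
      thus "norm (G t - G a) \<le> e" using close[of t a] t sub ab by auto
    qed
    moreover have "integral {a..b} (\<lambda>t. G t - G a) = integral {a..b} G - G a * (b - a)"
      using integral_diff[OF integrable_continuous_real[OF cab] integrable_const_ivl, of "G a"] ab by simp
    ultimately show ?thesis using ab by (simp add: a_def b_def divide_inverse)
  qed
  have I: "integral {0..1} G = (\<Sum>j<k. integral {real j/k..real (Suc j)/k} G)"
    using split[of k] kr by simp
  have "\<bar>(\<Sum>j<k. G (j/k)) - k * integral {0..1} G\<bar> = \<bar>\<Sum>j<k. (G (j/k) - k * integral {real j/k..real (Suc j)/k} G)\<bar>"
    by (simp add: I sum_distrib_left sum_subtractf)
  also have "\<dots> \<le> (\<Sum>j<k. \<bar>G (j/k) - k * integral {real j/k..real (Suc j)/k} G\<bar>)" by (rule sum_abs)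
  also have "\<dots> \<le> (\<Sum>j<k. e)"
  proof (rule sum_mono)
    fix j assume "j \<in> {..<k}"
    hence p: "\<bar>integral {real j/k..real (Suc j)/k} G - G (j/k) / k\<bar> \<le> e / k" using piece by auto
    have "\<bar>G (j/k) - k * integral {real j/k..real (Suc j)/k} G\<bar> = k * \<bar>integral {real j/k..real (Suc j)/k} G - G (j/k) / k\<bar>"
      using kr by (simp add: field_simps abs_minus_commute flip: abs_mult_pos)
    also have "\<dots> \<le> k * (e / k)" by (rule mult_left_mono[OF p]) simp
    finally show "\<bar>G (j/k) - k * integral {real j/k..real (Suc j)/k} G\<bar> \<le> e" using kr by simp
  qed
  finally show ?thesis by simp
qed


lemma rat_cesaro:
  fixes G :: "real \<Rightarrow> real" and q r :: int and p :: nat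
  assumes cont: "continuous_on {0..1} G" and p: "p > 0" and cop: "coprime q (int p)"
  shows "(\<lambda>L. (\<Sum>i<L. G (frac (real_of_int (q * int i + r) / real p))) / L)
           \<longlonglongrightarrow> (\<Sum>j<p. G (real j / real p)) / p"
proof -
  obtain M where M: "\<And>s. s \<in> {0..1} \<Longrightarrow> \<bar>G s\<bar> \<le> M" using bound_G[OF cont] by blast
  have fr: "frac z \<in> {0..1}" for z :: real using frac_lt_1[of z] by simp
  have fj: "frac (real j / real p) = real j / real p" if "j < p" for j
    using that p by (intro frac_eq_id) (auto simp: field_simps)
  have blk: "(\<Sum>j<p. G (frac (real_of_int (q * int (n0 + j) + r) / real p))) = (\<Sum>j<p. G (real j / real p))" for n0
  proof -
    have "(\<Sum>j<p. G (frac (real_of_int (q * int (n0 + j) + r) / real p)))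
        = (\<Sum>j<p. G (frac (0 + real_of_int (q * int j + (q * int n0 + r)) / real p)))"
      by (simp add: algebra_simps)
    also have "\<dots> = (\<Sum>j<p. G (frac (0 + real j / real p)))" by (rule perm_sum_frac[OF p cop])
    also have "\<dots> = (\<Sum>j<p. G (real j / real p))" by (intro sum.cong refl) (simp add: fj)
    finally show ?thesis .
  qed
  have M0: "\<bar>(\<Sum>j<p. G (real j / real p)) / p\<bar> \<le> M"
  proof -
    have "\<bar>(\<Sum>j<p. G (real j / real p))\<bar> \<le> (\<Sum>j<p. \<bar>G (real j / real p)\<bar>)" by (rule sum_abs)
    also have "\<dots> \<le> (\<Sum>j<p. M)" by (rule sum_mono, rule M) (use p in \<open>auto simp: field_simps\<close>)
    finally show ?thesis using p by (simp add: field_simps)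
  qed
  show ?thesis
  proof (rule cesaro_blocks[where M=M])
    fix e :: real assume e: "e > 0"
    show "\<exists>k>0. \<forall>n0. \<bar>(\<Sum>j<k. G (frac (real_of_int (q * int (n0 + j) + r) / real p))) - k * ((\<Sum>j<p. G (real j / real p)) / p)\<bar> \<le> k * e"
      using blk p e by (intro exI[of _ p]) auto
  next
    show "\<bar>G (frac (real_of_int (q * int i + r) / real p))\<bar> \<le> M" for i using M fr by blast
  qed (rule M0)
qed


lemma sum_diff_bound:
  fixes f g :: "nat \<Rightarrow> real"
  assumes "\<And>j. j < k \<Longrightarrow> \<bar>f j - g j\<bar> \<le> c"
  shows "\<bar>(\<Sum>j<k. f j) - (\<Sum>j<k. g j)\<bar> \<le> k*c"
proof -
  have "\<bar>(\<Sum>j<k. f j) - (\<Sum>j<k. g j)\<bar> = \<bar>\<Sum>j<k. f j - g j\<bar>" by (simp add: sum_subtractf)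
  also have "\<dots> \<le> (\<Sum>j<k. \<bar>f j - g j\<bar>)" by (rule sum_abs)
  also have "\<dots> \<le> (\<Sum>j<k. c)" by (rule sum_mono) (use assms in auto)
  finally show ?thesis by simp
qed

lemma weyl:
  fixes G :: "real \<Rightarrow> real" and \<alpha> t :: real
  assumes cont: "continuous_on {0..1} G" and G01: "G 0 = G 1" and irr: "\<alpha> \<notin> \<rat>"
  shows "(\<lambda>L. (\<Sum>i<L. G (frac (\<alpha> * real i + t))) / L) \<longlonglongrightarrow> integral {0..1} G"
proof -
  obtain M where M: "\<And>s. s \<in> {0..1} \<Longrightarrow> \<bar>G s\<bar> \<le> M" and IM: "\<bar>integral {0..1} G\<bar> \<le> M"
    using bound_G[OF cont] by blast
  have fr: "frac z \<in> {0..1}" for z :: real using frac_lt_1[of z] by simp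
  show ?thesis
  proof (rule cesaro_blocks[where M=M])
    fix e :: real assume e: "e > 0"
    obtain d where d: "d > 0" "d \<le> 1"
      and ucs: "\<forall>s\<in>{0..1}. \<forall>t\<in>{0..1}. \<bar>s - t\<bar> < d \<longrightarrow> \<bar>G s - G t\<bar> < e/3"
      and ucf: "\<forall>x y. \<bar>x - y\<bar> < d \<longrightarrow> \<bar>G (frac x) - G (frac y)\<bar> < e/3"
      using unif_frac[OF cont G01, of "e/3"] e by auto
    have inf: "infinite (approx_set \<alpha>)" using rational_iff_finite_approx_set irr by blast
    obtain h kk where hk: "(h, kk) \<in> approx_set \<alpha>" and kK: "kk > \<lceil>1/d\<rceil>"
      using infinite_approx_set[OF inf] by blast
    have kk0: "kk > 0" and cop0: "coprime h kk" and app: "\<bar>\<alpha> - of_int h / of_int kk\<bar> < 1 / (of_int kk)\<^sup>2"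
      using hk by (auto simp: approx_set_def)
    define k where "k = nat kk"
    have kkk: "kk = int k" using kk0 by (simp add: k_def)
    have k0: "k > 0" using kk0 kkk by simp
    have kr: "real k > 0" using k0 by simp
    have cop: "coprime h (int k)" using cop0 kkk by simp
    have app': "\<bar>\<alpha> - of_int h / real k\<bar> < 1 / (real k)\<^sup>2" using app kkk by simp
    have "real k > 1/d" using kK kkk by linarith
    hence kd: "1 / real k < d" using d kr by (simp add: field_simps)
    show "\<exists>k>0. \<forall>n0. \<bar>(\<Sum>j<k. G (frac (\<alpha> * real (n0 + j) + t))) - real k * integral {0..1} G\<bar> \<le> real k * e"
    proof (intro exI conjI allI)
      show "k > 0" by (rule k0)
      fix n0 :: nat
      define x where "x = \<alpha> * real n0 + t"
      have s1: "\<bar>(\<Sum>j<k. G (frac (\<alpha> * real (n0 + j) + t))) - (\<Sum>j<k. G (frac (x + real_of_int (h * int j + 0) / real k)))\<bar> \<le> k * (e/3)"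
      proof (rule sum_diff_bound)
        fix j assume j: "j < k"
        have "\<alpha> * real (n0 + j) + t - (x + real_of_int (h * int j + 0) / real k) = real j * (\<alpha> - of_int h / real k)"
          unfolding x_def by (simp add: algebra_simps)
        hence "\<bar>\<alpha> * real (n0 + j) + t - (x + real_of_int (h * int j + 0) / real k)\<bar> = real j * \<bar>\<alpha> - of_int h / real k\<bar>"
          by (simp add: abs_mult)
        also have "\<dots> \<le> real k * \<bar>\<alpha> - of_int h / real k\<bar>" using j by (intro mult_right_mono) auto
        also have "\<dots> < real k * (1 / (real k)\<^sup>2)" using app' kr by (intro mult_strict_left_mono) auto
        also have "\<dots> = 1 / real k" using kr by (simp add: power2_eq_square)
        finally have "\<bar>\<alpha> * real (n0 + j) + t - (x + real_of_int (h * int j + 0) / real k)\<bar> < d" using kd by linarith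
        thus "\<bar>G (frac (\<alpha> * real (n0 + j) + t)) - G (frac (x + real_of_int (h * int j + 0) / real k))\<bar> \<le> e/3"
          using ucf by (meson less_imp_le)
      qed
      have s2: "(\<Sum>j<k. G (frac (x + real_of_int (h * int j + 0) / real k))) = (\<Sum>j<k. G (frac (x + real j / real k)))"
        by (rule perm_sum_frac[OF k0 cop])
      define u where "u = frac x"
      define r where "r = \<lfloor>real k * u\<rfloor>"
      define w where "w = u - of_int r / real k"
      have a: "of_int r \<le> real k * u" "real k * u < of_int r + 1" unfolding r_def by linarith+
      have w1: "of_int r / real k \<le> u" using a kr by (simp add: divide_le_eq mult.commute)
      have w2: "u < (of_int r + 1) / real k" using a kr by (simp add: less_divide_eq mult.commute)
      have w: "0 \<le> w" "w < 1 / real k" using w1 w2 unfolding w_def by (auto simp: add_divide_distrib)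
      have xeq: "x + real j / real k = (w + real_of_int (1 * int j + r) / real k) + of_int \<lfloor>x\<rfloor>" for j
        unfolding w_def u_def frac_def using kr by (simp add: field_simps)
      have s3: "(\<Sum>j<k. G (frac (x + real j / real k))) = (\<Sum>j<k. G (frac (w + real j / real k)))"
      proof -
        have "(\<Sum>j<k. G (frac (x + real j / real k))) = (\<Sum>j<k. G (frac (w + real_of_int (1 * int j + r) / real k)))"
          by (intro sum.cong refl) (metis xeq frac_add_of_int_right)
        also have "\<dots> = (\<Sum>j<k. G (frac (w + real j / real k)))" by (rule perm_sum_frac[OF k0]) simp
        finally show ?thesis .
      qed
      have s4: "\<bar>(\<Sum>j<k. G (frac (w + real j / real k))) - (\<Sum>j<k. G (real j / real k))\<bar> \<le> k * (e/3)"
      proof (rule sum_diff_bound)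
        fix j assume j: "j < k"
        have fj: "frac (real j / real k) = real j / real k" using j kr by (intro frac_eq_id) (auto simp: field_simps)
        have "\<bar>(w + real j / real k) - real j / real k\<bar> < d" using w kd by auto
        hence "\<bar>G (frac (w + real j / real k)) - G (frac (real j / real k))\<bar> < e/3" using ucf by blast
        thus "\<bar>G (frac (w + real j / real k)) - G (real j / real k)\<bar> \<le> e/3" using fj by simp
      qed
      have s5: "\<bar>(\<Sum>j<k. G (real j / real k)) - k * integral {0..1} G\<bar> \<le> k * (e/3)"
      proof (rule riemann[OF cont k0])
        show "0 \<le> e/3" using e by simp
        fix s t :: real assume "s \<in> {0..1}" "t \<in> {0..1}" "\<bar>s - t\<bar> \<le> 1 / real k"
        thus "\<bar>G s - G t\<bar> \<le> e/3" using ucs kd by (meson le_less_trans less_imp_le)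
      qed
      have "real k * (e/3) + real k * (e/3) + real k * (e/3) = real k * e" by (simp add: algebra_simps)
      thus "\<bar>(\<Sum>j<k. G (frac (\<alpha> * real (n0 + j) + t))) - real k * integral {0..1} G\<bar> \<le> real k * e"
        using s1 s2 s3 s4 s5 by linarith
    qed
  next
    show "\<bar>G (frac (\<alpha> * real i + t))\<bar> \<le> M" for i using M fr by blast
  qed (rule IM)
qed


lemma phi_pos: "t > 0 \<Longrightarrow> phi t = - t * ln t" by (simp add: phi_def)
lemma phi_0[simp]: "phi 0 = 0" and phi_1[simp]: "phi 1 = 0" by (simp_all add: phi_def)

lemma phi_mult: assumes "x \<ge> 0" "y \<ge> 0" shows "phi (x*y) = x * phi y + y * phi x"
proof (cases "x = 0 \<or> y = 0")
  case True then show ?thesis by (auto simp: phi_def)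
next
  case False
  then have "x > 0" "y > 0" using assms by auto
  then show ?thesis by (simp add: phi_def ln_mult algebra_simps)
qed

lemma phi_le1: assumes "t \<ge> 0" shows "phi t \<le> 1"
proof (cases "t = 0")
  case False
  hence t: "t > 0" using assms by simp
  have "ln (1/t) \<le> 1/t - 1" using t by (intro ln_le_minus_one) simp
  hence "- ln t \<le> 1/t - 1" using t by (simp add: ln_div)
  hence "t * (- ln t) \<le> t * (1/t - 1)" using t by (intro mult_left_mono) auto
  hence "phi t \<le> 1 - t" using t by (simp add: phi_def algebra_simps)
  thus ?thesis using t by simp
qed simp

lemma phi_ge0: assumes "t \<ge> 0" "t \<le> 1" shows "phi t \<ge> 0"
proof (cases "t = 0")
  case False
  hence "t > 0" using assms by simp
  hence "ln t \<le> 0" using assms by simp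
  thus ?thesis using \<open>t > 0\<close> by (simp add: phi_def mult_nonneg_nonpos)
qed simp

lemma cont_from_right:
  fixes F :: "real \<Rightarrow> real"
  assumes "\<And>x. x > 0 \<Longrightarrow> isCont F x" "(F \<longlongrightarrow> F 0) (at_right 0)"
  shows "continuous_on {0..1} F"
  unfolding continuous_on_eq_continuous_within
proof
  fix x :: real assume x: "x \<in> {0..1}"
  show "continuous (at x within {0..1}) F"
  proof (cases "x = 0")
    case True
    have "at (0::real) within {0..1} = at_right 0" by (rule at_within_Icc_at_right) simp
    thus ?thesis using True assms(2) by (simp add: continuous_within)
  next
    case False
    hence "x > 0" using x by simp
    thus ?thesis using assms(1) continuous_at_imp_continuous_at_within by blast
  qed
qed

lemma isCont_phi: assumes "x > 0" shows "isCont phi x"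
proof -
  have ev: "eventually (\<lambda>t. phi t = - t * ln t) (nhds x)"
  proof -
    have "eventually (\<lambda>t. t \<in> {0<..}) (nhds x)" using assms by (intro eventually_nhds_in_open) auto
    thus ?thesis by eventually_elim (simp add: phi_def)
  qed
  have "isCont (\<lambda>t. - t * ln t) x" using assms by (intro continuous_intros) auto
  thus ?thesis using isCont_cong[OF ev] by simp
qed

lemma phi_right0: "(phi \<longlongrightarrow> phi 0) (at_right 0)"
proof -
  have "((\<lambda>t::real. - t * ln t) \<longlongrightarrow> 0) (at_right 0)" by real_asymp
  moreover have "eventually (\<lambda>t. - t * ln t = phi t) (at_right (0::real))"
    by (simp add: eventually_at_right_less eventually_mono phi_def)
  ultimately show ?thesis by (simp add: tendsto_cong)
qed

lemma cont_phi: "continuous_on {0..1} phi"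
  by (rule cont_from_right[OF isCont_phi phi_right0])

lemma cont_phi1: "continuous_on {0..1} (\<lambda>t. phi (1 - t))"
proof -
  have "continuous_on {0..1} (\<lambda>t::real. 1 - t)" by (intro continuous_intros)
  moreover have "(\<lambda>t::real. 1 - t) ` {0..1} \<subseteq> {0..1}" by auto
  ultimately show ?thesis using continuous_on_compose2[OF cont_phi] by blast
qed

definition Fphi :: "real \<Rightarrow> real" where "Fphi t = t^2/4 + t * phi t / 2"

lemma Fphi_deriv: assumes "t > 0" shows "(Fphi has_real_derivative phi t) (at t)"
proof -
  have ev: "eventually (\<lambda>s. Fphi s = s^2/4 - s^2 * ln s / 2) (nhds t)"
  proof -
    have "eventually (\<lambda>s. s \<in> {0<..}) (nhds t)" using assms by (intro eventually_nhds_in_open) auto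
    thus ?thesis by eventually_elim (simp add: Fphi_def phi_def power2_eq_square)
  qed
  have "((\<lambda>s. s^2/4 - s^2 * ln s / 2) has_real_derivative (2*t/4 - (2*t*ln t + t^2 * (1/t))/2)) (at t)"
    using assms by (auto intro!: derivative_eq_intros)
  moreover have "2*t/4 - (2*t*ln t + t^2 * (1/t))/2 = phi t" using assms by (simp add: phi_def power2_eq_square field_simps)
  ultimately show ?thesis using DERIV_cong_ev[OF refl ev refl] by simp
qed

lemma cont_Fphi: "continuous_on {0..1} Fphi"
  unfolding Fphi_def by (intro continuous_intros cont_phi) auto

lemma int_phi: "integral {0..1} phi = 1/4"
proof -
  have "(phi has_integral (Fphi 1 - Fphi 0)) {0..1}"
  proof (rule fundamental_theorem_of_calculus_interior)
    show "continuous_on {0..1} Fphi" by (rule cont_Fphi)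
    fix x :: real assume "x \<in> {0<..<1}"
    thus "(Fphi has_vector_derivative phi x) (at x)"
      using Fphi_deriv has_real_derivative_iff_has_vector_derivative by auto
  qed simp
  thus ?thesis by (simp add: integral_unique Fphi_def)
qed

lemma int_phi1: "integral {0..1} (\<lambda>t. phi (1 - t)) = 1/4"
proof -
  have "((\<lambda>t. phi (1 - t)) has_integral ((- Fphi (1 - 1)) - (- Fphi (1 - 0)))) {0..1}"
  proof (rule fundamental_theorem_of_calculus_interior)
    have "continuous_on {0..1} (\<lambda>t::real. 1 - t)" by (intro continuous_intros)
    moreover have "(\<lambda>t::real. 1 - t) ` {0..1} \<subseteq> {0..1}" by auto
    ultimately have "continuous_on {0..1} (\<lambda>t. Fphi (1 - t))" using continuous_on_compose2[OF cont_Fphi] by blast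
    thus "continuous_on {0..1} (\<lambda>t. - Fphi (1 - t))" by (intro continuous_intros)
    fix x :: real assume x: "x \<in> {0<..<1}"
    have d: "(Fphi has_real_derivative phi (1 - x)) (at (1 - x))" using x by (intro Fphi_deriv) auto
    have d2: "((\<lambda>t::real. 1 - t) has_real_derivative (0 - 1)) (at x)" by (intro derivative_eq_intros) auto
    have c: "((\<lambda>t. Fphi (1 - t)) has_real_derivative phi (1 - x) * (0 - 1)) (at x)"
      using DERIV_chain2[where f=Fphi and g="\<lambda>t. 1 - t", OF _ d2] d by simp
    have "((\<lambda>t. - Fphi (1 - t)) has_real_derivative (- (phi (1 - x) * (0 - 1)))) (at x)"
      by (rule DERIV_minus[OF c])
    thus "((\<lambda>t. - Fphi (1 - t)) has_vector_derivative phi (1 - x)) (at x)"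
      using has_real_derivative_iff_has_vector_derivative by auto
  qed simp
  thus ?thesis by (simp add: integral_unique Fphi_def)
qed


lemma lmeas_sub01: "S \<in> sets lebesgue \<Longrightarrow> S \<subseteq> {0..1::real} \<Longrightarrow> S \<in> lmeasurable"
  by (rule fmeasurableI2[of "{0..1}"]) auto

lemma interval_sandwich:
  fixes S :: "real set"
  assumes iv: "is_interval S" and sub: "S \<subseteq> {0..1}" and ms: "S \<in> sets lebesgue"
    and me: "measure lebesgue S = \<delta>" and d: "\<delta> > 0"
  shows "{Inf S<..<Sup S} \<subseteq> S \<and> S \<subseteq> {Inf S..Sup S} \<and> Sup S - Inf S = \<delta>"
proof -
  have ne: "S \<noteq> {}" using me d by auto
  have bb1: "bdd_below S" using sub by (intro bdd_belowI[of _ 0]) auto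
  have bb2: "bdd_above S" using sub by (intro bdd_aboveI[of _ 1]) auto
  note bb = bb1 bb2
  have s1: "S \<subseteq> {Inf S..Sup S}" using bb by (auto intro: cInf_lower cSup_upper)
  have s2: "{Inf S<..<Sup S} \<subseteq> S"
  proof
    fix x assume x: "x \<in> {Inf S<..<Sup S}"
    then obtain u where u: "u \<in> S" "u < x" using cInf_less_iff[OF ne bb(1)] by auto
    obtain v where v: "v \<in> S" "x < v" using less_cSup_iff[OF ne bb(2)] x by auto
    show "x \<in> S" using iv u v unfolding is_interval_1 by (meson less_imp_le)
  qed
  have le: "Inf S \<le> Sup S" using ne bb by (meson cInf_le_cSup)
  have "measure lebesgue {Inf S<..<Sup S} \<le> measure lebesgue S"
    by (rule measure_mono_fmeasurable[OF s2]) (use lmeas_sub01[OF ms sub] in auto)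
  moreover have "measure lebesgue S \<le> measure lebesgue {Inf S..Sup S}"
    by (rule measure_mono_fmeasurable[OF s1 ms]) simp
  ultimately have "Sup S - Inf S = \<delta>" using le me by simp
  thus ?thesis using s1 s2 by blast
qed

lemma partition_std:
  assumes ep: "equivolume_partition N A" and N: "N \<ge> 1"
  shows "\<exists>\<sigma>. bij_betw \<sigma> {..<N} {..<N} \<and>
    (\<forall>n<N. {real (\<sigma> n)/N<..<real (Suc (\<sigma> n))/N} \<subseteq> A n \<and> A n \<subseteq> {real (\<sigma> n)/N..real (Suc (\<sigma> n))/N})"
proof -
  define \<delta> :: real where "\<delta> = 1 / N"
  have d: "\<delta> > 0" using N by (simp add: \<delta>_def)
  have cell: "\<And>n. n < N \<Longrightarrow> is_interval (A n) \<and> A n \<subseteq> {0..1} \<and> A n \<in> sets lebesgue \<and> measure lebesgue (A n) = \<delta>"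
    and disj: "\<And>n n'. n < N \<Longrightarrow> n' < N \<Longrightarrow> n \<noteq> n' \<Longrightarrow> A n \<inter> A n' = {}"
    and cov: "(\<Union>n<N. A n) = {0..1}"
    using ep unfolding equivolume_partition_def \<delta>_def by auto
  define a where "a n = Inf (A n)" for n
  have sw: "{a n<..<a n + \<delta>} \<subseteq> A n \<and> A n \<subseteq> {a n..a n + \<delta>}" if "n < N" for n
    using interval_sandwich[of "A n" \<delta>] cell[OF that] d unfolding a_def by auto
  have lm: "A n \<in> lmeasurable" if "n < N" for n using cell[OF that] lmeas_sub01 by blast
  have a0: "a n \<ge> 0" if "n < N" for n
  proof -
    have "a n + \<delta>/2 \<in> A n" using sw[OF that] d by auto
    hence "A n \<noteq> {}" by auto
    thus ?thesis unfolding a_def using cell[OF that] by (intro cInf_greatest) auto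
  qed
  have a1: "a n + \<delta> \<le> 1" if "n < N" for n
  proof (rule ccontr)
    assume "\<not> a n + \<delta> \<le> 1"
    define z where "z = max (a n) 1 / 2 + max (a n) 1 / 2"
    have "(max (a n) 1 + a n + \<delta>)/2 \<in> A n" using sw[OF that] d \<open>\<not> a n + \<delta> \<le> 1\<close> by auto
    moreover have "(max (a n) 1 + a n + \<delta>)/2 > 1" using \<open>\<not> a n + \<delta> \<le> 1\<close> by auto
    ultimately show False using cell[OF that] by auto
  qed
  have key1: "a n' + \<delta> \<le> a n" if "n < N" "n' < N" "n \<noteq> n'" "a n' < a n" for n n'
  proof (rule ccontr)
    assume h: "\<not> a n' + \<delta> \<le> a n"
    define z where "z = (a n + min (a n' + \<delta>) (a n + \<delta>)) / 2"
    have "z \<in> A n" using sw[OF that(1)] h d unfolding z_def by (auto simp: min_def)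
    moreover have "z \<in> A n'" using sw[OF that(2)] h d that(4) unfolding z_def by (auto simp: min_def)
    ultimately show False using disj[OF that(1-3)] by auto
  qed
  have ainj: "a n \<noteq> a n'" if "n < N" "n' < N" "n \<noteq> n'" for n n'
  proof
    assume h: "a n = a n'"
    have "a n + \<delta>/2 \<in> A n" "a n + \<delta>/2 \<in> A n'" using sw[OF that(1)] sw[OF that(2)] h d by auto
    thus False using disj[OF that] by auto
  qed
  define S where "S n = {n'. n' < N \<and> a n' < a n}" for n
  have finS: "finite (S n)" for n unfolding S_def by auto
  have rank: "a n = card (S n) * \<delta>" if n: "n < N" for n
  proof -
    have subS: "S n \<subseteq> {..<N}" unfolding S_def by auto
    have U: "(\<Union>n'\<in>S n. A n') \<in> lmeasurable"
      by (rule fmeasurable.finite_UN[OF finS]) (use lm in \<open>auto simp: S_def\<close>)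
    have mU: "measure lebesgue (\<Union>n'\<in>S n. A n') = (\<Sum>n'\<in>S n. measure lebesgue (A n'))"
      by (rule measure_negligible_finite_Union_image[OF finS])
         (use lm disj in \<open>auto simp: S_def pairwise_def\<close>)
    also have "\<dots> = card (S n) * \<delta>" using cell by (simp add: S_def)
    finally have mU': "measure lebesgue (\<Union>n'\<in>S n. A n') = card (S n) * \<delta>" .
    have "(\<Union>n'\<in>S n. A n') \<subseteq> {0..a n}"
    proof
      fix x assume "x \<in> (\<Union>n'\<in>S n. A n')"
      then obtain n' where n': "n' \<in> S n" "x \<in> A n'" by auto
      have "n' < N" "a n' < a n" using n'(1) unfolding S_def by auto
      moreover have "n \<noteq> n'" using calculation by auto
      ultimately have "a n' + \<delta> \<le> a n" using key1 n by blast
      moreover have "x \<in> {a n'..a n' + \<delta>}" using sw \<open>n' < N\<close> n'(2) by blast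
      moreover have "a n' \<ge> 0" using a0 \<open>n' < N\<close> by blast
      ultimately show "x \<in> {0..a n}" by auto
    qed
    hence le1: "card (S n) * \<delta> \<le> a n"
      using measure_mono_fmeasurable[of "\<Union>n'\<in>S n. A n'" "{0..a n}" lebesgue] U a0[OF n] mU' by auto
    have "{0<..<a n} \<subseteq> (\<Union>n'\<in>S n. A n')"
    proof
      fix x assume x: "x \<in> {0<..<a n}"
      hence "x \<in> {0..1}" using a1[OF n] d by auto
      hence "x \<in> (\<Union>n<N. A n)" using cov by simp
      then obtain n' where n': "n' < N" "x \<in> A n'" by auto
      have "a n' \<le> x" using sw[OF n'(1)] n'(2) by auto
      hence "a n' < a n" using x by auto
      thus "x \<in> (\<Union>n'\<in>S n. A n')" using n' unfolding S_def by auto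
    qed
    hence le2: "a n \<le> card (S n) * \<delta>"
      using measure_mono_fmeasurable[of "{0<..<a n}" "\<Union>n'\<in>S n. A n'" lebesgue] U a0[OF n] mU' by auto
    show ?thesis using le1 le2 by linarith
  qed
  define \<sigma> where "\<sigma> n = card (S n)" for n
  have \<sigma>lt: "\<sigma> n < N" if n: "n < N" for n
  proof -
    have "S n \<subseteq> {..<N} - {n}" unfolding S_def by auto
    hence "card (S n) \<le> card ({..<N} - {n})" by (intro card_mono) auto
    also have "\<dots> = N - 1" using n by simp
    finally show ?thesis unfolding \<sigma>_def using N by linarith
  qed
  have inj: "inj_on \<sigma> {..<N}"
  proof (rule inj_onI)
    fix n n' assume "n \<in> {..<N}" "n' \<in> {..<N}" "\<sigma> n = \<sigma> n'"
    hence "a n = a n'" using rank unfolding \<sigma>_def by auto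
    thus "n = n'" using ainj \<open>n \<in> {..<N}\<close> \<open>n' \<in> {..<N}\<close> by blast
  qed
  have bij: "bij_betw \<sigma> {..<N} {..<N}"
    unfolding bij_betw_def using inj \<sigma>lt endo_inj_surj[of "{..<N}" \<sigma>] by auto
  have an: "a n = real (\<sigma> n) / N" "a n + \<delta> = real (Suc (\<sigma> n)) / N" if "n < N" for n
    using rank[OF that] N by (auto simp: \<sigma>_def \<delta>_def field_simps)
  show ?thesis
    using bij sw an by (intro exI[of _ \<sigma>]) auto
qed


locale tent =
  fixes m l :: real
  assumes m1: "m > 1" and l1: "l > 1" and ml: "1/m + 1/l = 1"
begin

definition T :: "real \<Rightarrow> real" where "T x = min (m*x) (l*(1-x))"

lemma m0: "m > 0" and l0: "l > 0" using m1 l1 by auto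

lemma lm: "l * (1 - 1/m) = 1"
proof -
  have "1 - 1/m = 1/l" using ml by simp
  thus ?thesis using l0 by simp
qed

lemma T_eq: "(\<lambda>x. if x \<le> 1/m then m*x else l*(1-x)) = T"
proof
  fix x
  show "(if x \<le> 1/m then m*x else l*(1-x)) = T x"
  proof (cases "x \<le> 1/m")
    case True
    hence "m*x \<le> 1" using m0 by (simp add: field_simps)
    moreover have "l*(1-x) \<ge> l*(1-1/m)" using True l0 by (intro mult_left_mono) auto
    ultimately show ?thesis using True lm by (simp add: T_def)
  next
    case False
    hence "m*x > 1" using m0 by (simp add: field_simps)
    moreover have "l*(1-x) < l*(1-1/m)" using False l0 by (intro mult_strict_left_mono) auto
    ultimately show ?thesis using False lm by (simp add: T_def)
  qed
qed

lemma T_cont: "continuous_on UNIV T"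
  unfolding T_def by (intro continuous_intros)

lemma T_pre_point: "T -` {y} \<subseteq> {y/m, 1 - y/l}"
proof
  fix x assume "x \<in> T -` {y}"
  hence "min (m*x) (l*(1-x)) = y" by (simp add: T_def)
  hence "m*x = y \<or> l*(1-x) = y" by (metis min_def)
  thus "x \<in> {y/m, 1 - y/l}" using m0 l0 by (auto simp: field_simps)
qed

lemma closed_leb: "closed S \<Longrightarrow> S \<in> sets lebesgue"
  by (simp add: borel_closed)

lemma cell_meas:
  assumes d: "\<delta> > 0"
    and A: "{a<..<a+\<delta>} \<subseteq> A" "A \<subseteq> {a..a+\<delta>}"
    and A': "{a'<..<a'+\<delta>} \<subseteq> A'" "A' \<subseteq> {a'..a'+\<delta>}"
  shows "measure lebesgue (T -` A' \<inter> A) = measure lebesgue (T -` {a'..a'+\<delta>} \<inter> {a..a+\<delta>})"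
proof -
  define C where "C = T -` {a'..a'+\<delta>} \<inter> {a..a+\<delta>}"
  define F where "F = {a, a+\<delta>, a'/m, 1 - a'/l, (a'+\<delta>)/m, 1 - (a'+\<delta>)/l}"
  have Cc: "closed C" unfolding C_def
    by (intro closed_Int closed_vimage T_cont) auto
  have sub: "T -` A' \<inter> A \<subseteq> C" using A A' unfolding C_def by auto
  have G: "C - (T -` A' \<inter> A) \<subseteq> F"
  proof
    fix x assume x: "x \<in> C - (T -` A' \<inter> A)"
    hence x1: "x \<in> {a..a+\<delta>}" "T x \<in> {a'..a'+\<delta>}" unfolding C_def by auto
    have "x = a \<or> x = a+\<delta> \<or> T x = a' \<or> T x = a'+\<delta>"
    proof (rule ccontr)
      assume "\<not> ?thesis"
      hence "x \<in> {a<..<a+\<delta>}" "T x \<in> {a'<..<a'+\<delta>}" using x1 by auto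
      hence "x \<in> T -` A' \<inter> A" using A A' by auto
      thus False using x by auto
    qed
    moreover have "x \<in> {T x / m, 1 - T x / l}" using T_pre_point[of "T x"] by auto
    ultimately show "x \<in> F" unfolding F_def by auto
  qed
  have finG: "finite (C - (T -` A' \<inter> A))" by (rule finite_subset[OF G]) (simp add: F_def)
  have null: "C - (T -` A' \<inter> A) \<in> null_sets lebesgue"
    using negligible_finite[OF finG] negligible_iff_null_sets by blast
  have eq: "T -` A' \<inter> A = C - (C - (T -` A' \<inter> A))" using sub by blast
  have "measure lebesgue (T -` A' \<inter> A) = measure lebesgue (C - (C - (T -` A' \<inter> A)))"
    by (rule arg_cong[OF eq])
  also have "\<dots> = measure lebesgue C" by (rule measure_Diff_null_set[OF closed_leb[OF Cc] null])
  finally have "measure lebesgue (T -` A' \<inter> A) = measure lebesgue C" .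
  thus ?thesis by (simp add: C_def)
qed

definition Pc :: "nat \<Rightarrow> nat \<Rightarrow> nat \<Rightarrow> real" where
  "Pc N i j = measure lebesgue (T -` {real j/N..real (Suc j)/N} \<inter> {real i/N..real (Suc i)/N})"

definition Hstd :: "nat \<Rightarrow> real" where
  "Hstd N = (\<Sum>i<N. \<Sum>j<N. (1 / real N) * phi (real N * Pc N i j))"

lemma H_part_std:
  assumes ep: "equivolume_partition N A" and N: "N \<ge> 1"
  shows "H_part N A T = Hstd N"
proof -
  obtain \<sigma> where bij: "bij_betw \<sigma> {..<N} {..<N}" and
    sw: "\<And>n. n < N \<Longrightarrow> {real (\<sigma> n)/N<..<real (Suc (\<sigma> n))/N} \<subseteq> A n \<and> A n \<subseteq> {real (\<sigma> n)/N..real (Suc (\<sigma> n))/N}"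
    using partition_std[OF ep N] by blast
  have Nr: "real N > 0" using N by simp
  have suc: "real (Suc k) / N = real k / N + 1/N" for k using Nr by (simp add: field_simps)
  have s1: "{real (\<sigma> n)/N<..<real (\<sigma> n)/N + 1/N} \<subseteq> A n \<and> A n \<subseteq> {real (\<sigma> n)/N..real (\<sigma> n)/N + 1/N}" if "n < N" for n
    using sw[OF that] unfolding suc .
  have tp: "trans_prob N A T n n' = real N * Pc N (\<sigma> n) (\<sigma> n')" if "n < N" "n' < N" for n n'
  proof -
    have "measure lebesgue (T -` A n' \<inter> A n) = measure lebesgue (T -` {real (\<sigma> n')/N..real (\<sigma> n')/N + 1/N} \<inter> {real (\<sigma> n)/N..real (\<sigma> n)/N + 1/N})"
      by (rule cell_meas) (use s1[OF that(1)] s1[OF that(2)] Nr in auto)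
    thus ?thesis unfolding trans_prob_def Pc_def suc by simp
  qed
  have "H_part N A T = (\<Sum>n<N. \<Sum>n'<N. (1 / real N) * phi (real N * Pc N (\<sigma> n) (\<sigma> n')))"
    unfolding H_part_def by (rule sum.cong[OF refl], rule sum.cong[OF refl]) (simp add: tp)
  also have "\<dots> = (\<Sum>n<N. \<Sum>j<N. (1 / real N) * phi (real N * Pc N (\<sigma> n) j))"
    by (rule sum.cong[OF refl], rule sum.reindex_bij_betw[OF bij])
  also have "\<dots> = (\<Sum>i<N. \<Sum>j<N. (1 / real N) * phi (real N * Pc N i j))"
    by (rule sum.reindex_bij_betw[OF bij, where g="\<lambda>i. \<Sum>j<N. (1 / real N) * phi (real N * Pc N i j)"])
  finally show ?thesis unfolding Hstd_def .
qed

end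


definition ov :: "real \<Rightarrow> real \<Rightarrow> real \<Rightarrow> real \<Rightarrow> real" where
  "ov a b c d = max 0 (min b d - max a c)"

lemma ov_nonneg: "ov a b c d \<ge> 0" by (simp add: ov_def)

lemma meas_affine:
  fixes \<alpha> \<beta> U V :: real
  assumes "\<alpha> \<noteq> 0"
  shows "measure lebesgue {x. U \<le> \<alpha>*x + \<beta> \<and> \<alpha>*x + \<beta> \<le> V} = max 0 (V - U) / \<bar>\<alpha>\<bar>"
proof (cases "\<alpha> > 0")
  case True
  have "{x. U \<le> \<alpha>*x + \<beta> \<and> \<alpha>*x + \<beta> \<le> V} = {(U-\<beta>)/\<alpha>..(V-\<beta>)/\<alpha>}"
    using True by (auto simp: field_simps)
  moreover have "measure lebesgue {(U-\<beta>)/\<alpha>..(V-\<beta>)/\<alpha>} = max 0 (V - U) / \<bar>\<alpha>\<bar>"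
  proof (cases "U \<le> V")
    case True
    hence "(U-\<beta>)/\<alpha> \<le> (V-\<beta>)/\<alpha>" using \<open>\<alpha> > 0\<close> by (simp add: divide_right_mono)
    thus ?thesis using True \<open>\<alpha> > 0\<close> by (simp add: field_simps)
  next
    case False
    hence "{(U-\<beta>)/\<alpha>..(V-\<beta>)/\<alpha>} = {}" using \<open>\<alpha> > 0\<close> by (auto simp: field_simps)
    thus ?thesis using False by simp
  qed
  ultimately show ?thesis by simp
next
  case False
  hence a: "\<alpha> < 0" using assms by simp
  have "{x. U \<le> \<alpha>*x + \<beta> \<and> \<alpha>*x + \<beta> \<le> V} = {(V-\<beta>)/\<alpha>..(U-\<beta>)/\<alpha>}"
    using a by (auto simp: field_simps)
  moreover have "measure lebesgue {(V-\<beta>)/\<alpha>..(U-\<beta>)/\<alpha>} = max 0 (V - U) / \<bar>\<alpha>\<bar>"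
  proof (cases "U \<le> V")
    case True
    hence "(V-\<beta>)/\<alpha> \<le> (U-\<beta>)/\<alpha>" using a by (simp add: divide_right_mono_neg)
    thus ?thesis using True a by (simp add: field_simps)
  next
    case False
    hence "{(V-\<beta>)/\<alpha>..(U-\<beta>)/\<alpha>} = {}" using a by (auto simp: field_simps)
    thus ?thesis using False by simp
  qed
  ultimately show ?thesis by simp
qed

lemma sum_ov:
  assumes "0 \<le> a" "a \<le> b"
  shows "(\<Sum>j<n. ov a b (real j) (real j + 1)) = max 0 (min b (real n) - a)"
proof (induction n)
  case 0 then show ?case using assms by (simp add: max_def min_def)
next
  case (Suc n)
  have "(\<Sum>j<Suc n. ov a b (real j) (real j + 1)) = max 0 (min b (real n) - a) + ov a b (real n) (real n + 1)"
    using Suc by simp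
  also have "\<dots> = max 0 (min b (real n + 1) - a)"
    unfolding ov_def using assms by (auto simp: max_def min_def)
  finally show ?case by simp
qed

lemma phi_scale:
  assumes "z \<ge> 0" "s > 0"
  shows "phi (z / s) = (z / s) * ln s + phi z / s"
proof -
  have "phi (z * (1/s)) = z * phi (1/s) + (1/s) * phi z" using assms by (intro phi_mult) auto
  moreover have "phi (1/s) = ln s / s" using assms by (simp add: phi_def ln_div)
  ultimately show ?thesis by (simp add: field_simps)
qed

lemma ov_phi:
  fixes \<theta> s :: real and j :: nat
  assumes s: "s > 1" and t0: "\<theta> \<ge> 0"
  defines "A \<equiv> nat \<lfloor>\<theta>\<rfloor>" and "B \<equiv> nat \<lfloor>\<theta> + s\<rfloor>"
  shows "phi (ov \<theta> (\<theta>+s) (real j) (real j + 1)) =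
    (if j = A then phi (1 - frac \<theta>) else 0) + (if j = B then phi (frac (\<theta> + s)) else 0)"
proof -
  have A: "real A \<le> \<theta>" "\<theta> < real A + 1" using t0 unfolding A_def by linarith+
  have B: "real B \<le> \<theta> + s" "\<theta> + s < real B + 1" using t0 s unfolding B_def by linarith+
  have fA: "frac \<theta> = \<theta> - real A" using t0 unfolding A_def frac_def by simp
  have fB: "frac (\<theta>+s) = \<theta> + s - real B" using t0 s unfolding B_def frac_def by simp
  have AB: "A < B" using A B s by linarith
  consider "j < A" | "j = A" | "A < j \<and> j < B" | "j = B" | "B < j" by linarith
  thus ?thesis
  proof cases
    case 1
    hence "real j + 1 \<le> real A" by linarith
    hence "ov \<theta> (\<theta>+s) (real j) (real j + 1) = 0" unfolding ov_def using A by (auto simp: max_def min_def)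
    thus ?thesis using 1 AB by simp
  next
    case 2
    hence "ov \<theta> (\<theta>+s) (real j) (real j + 1) = 1 - frac \<theta>" unfolding ov_def fA using A s by (auto simp: max_def min_def)
    thus ?thesis using 2 AB by simp
  next
    case 3
    hence "real A + 1 \<le> real j" "real j + 1 \<le> real B" by linarith+
    hence "ov \<theta> (\<theta>+s) (real j) (real j + 1) = 1" unfolding ov_def using A B by (auto simp: max_def min_def)
    thus ?thesis using 3 by simp
  next
    case 4
    hence "real A + 1 \<le> real j" using AB by linarith
    hence "ov \<theta> (\<theta>+s) (real j) (real j + 1) = frac (\<theta> + s)" unfolding ov_def fB using A B 4 by (auto simp: max_def min_def)
    thus ?thesis using 4 AB by simp
  next
    case 5
    hence "real B + 1 \<le> real j" by linarith
    hence "ov \<theta> (\<theta>+s) (real j) (real j + 1) = 0" unfolding ov_def using B by (auto simp: max_def min_def)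
    thus ?thesis using 5 AB by simp
  qed
qed

lemma cell_ent:
  fixes \<theta> s :: real and N :: nat
  assumes s: "s > 1" and t0: "\<theta> \<ge> 0" and tN: "\<theta> + s \<le> real N"
  shows "(\<Sum>j<N. phi (ov \<theta> (\<theta>+s) (real j) (real j + 1) / s)) = ln s + (phi (1 - frac \<theta>) + phi (frac (\<theta> + s))) / s"
proof -
  define A where "A = nat \<lfloor>\<theta>\<rfloor>"
  define B where "B = nat \<lfloor>\<theta> + s\<rfloor>"
  have AN: "A < N" using t0 s tN unfolding A_def by linarith
  have s1: "(\<Sum>j<N. phi (ov \<theta> (\<theta>+s) (real j) (real j + 1))) = phi (1 - frac \<theta>) + phi (frac (\<theta> + s))"
  proof -
    have "(\<Sum>j<N. phi (ov \<theta> (\<theta>+s) (real j) (real j + 1))) =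
      (\<Sum>j<N. (if j = A then phi (1 - frac \<theta>) else 0) + (if j = B then phi (frac (\<theta> + s)) else 0))"
      by (rule sum.cong[OF refl]) (use ov_phi[OF s t0] in \<open>simp add: A_def B_def\<close>)
    also have "\<dots> = phi (1 - frac \<theta>) + (if B < N then phi (frac (\<theta> + s)) else 0)"
      using AN by (simp add: sum.distrib)
    also have "\<dots> = phi (1 - frac \<theta>) + phi (frac (\<theta> + s))"
    proof (cases "B < N")
      case False
      hence "real B \<ge> real N" by simp
      hence "\<theta> + s = real N" using tN t0 s unfolding B_def by linarith
      hence fz: "frac (\<theta> + s) = 0" by simp
      thus ?thesis using False by (simp del: frac_eq_0_iff)
    qed simp
    finally show ?thesis .
  qed
  have s2: "(\<Sum>j<N. ov \<theta> (\<theta>+s) (real j) (real j + 1)) = s"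
    using sum_ov[of \<theta> "\<theta>+s" N] t0 s tN by simp
  have "(\<Sum>j<N. phi (ov \<theta> (\<theta>+s) (real j) (real j + 1) / s)) =
        (\<Sum>j<N. (ov \<theta> (\<theta>+s) (real j) (real j + 1) / s) * ln s + phi (ov \<theta> (\<theta>+s) (real j) (real j + 1)) / s)"
    by (rule sum.cong[OF refl]) (use phi_scale ov_nonneg s in auto)
  also have "\<dots> = (\<Sum>j<N. ov \<theta> (\<theta>+s) (real j) (real j + 1)) / s * ln s + (\<Sum>j<N. phi (ov \<theta> (\<theta>+s) (real j) (real j + 1))) / s"
    by (simp add: sum.distrib sum_divide_distrib sum_distrib_right)
  also have "\<dots> = ln s + (phi (1 - frac \<theta>) + phi (frac (\<theta> + s))) / s"
    using s1 s2 s by simp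
  finally show ?thesis .
qed


context tent begin

lemma Tl: "x \<le> 1/m \<Longrightarrow> T x = m*x"
  using fun_cong[OF T_eq, of x] by simp

lemma Tr: "x \<ge> 1/m \<Longrightarrow> T x = l*(1-x)"
proof -
  assume x: "x \<ge> 1/m"
  show ?thesis
  proof (cases "x = 1/m")
    case True
    thus ?thesis using Tl[of x] lm m0 by simp
  next
    case False
    thus ?thesis using fun_cong[OF T_eq, of x] x by simp
  qed
qed

lemma Pc_left:
  assumes N: "N > 0" and i: "real (Suc i) * m \<le> real N"
  shows "real N * Pc N i j = ov (m * real i) (m * real i + m) (real j) (real j + 1) / m"
proof -
  have Nr: "real N > 0" using N by simp
  have "T -` {real j/N..real (Suc j)/N} \<inter> {real i/N..real (Suc i)/N} =
      {x. max (m * real i) (real j) \<le> (m * N) * x + 0 \<and> (m * N) * x + 0 \<le> min (m * real i + m) (real j + 1)}"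
  proof (intro set_eqI iffI)
    fix x assume x: "x \<in> T -` {real j/N..real (Suc j)/N} \<inter> {real i/N..real (Suc i)/N}"
    hence x1: "real i \<le> N * x" "N * x \<le> real i + 1" "real j \<le> N * T x" "N * T x \<le> real j + 1"
      using Nr by (auto simp: field_simps)
    have "x \<le> (real i + 1)/N" using x1(2) Nr by (simp add: field_simps)
    moreover have "(real i + 1)/N \<le> 1/m" using i Nr m0 by (simp add: field_simps)
    ultimately have "x \<le> 1/m" by linarith
    hence Tx: "T x = m * x" by (rule Tl)
    have "m * real i \<le> m * (N * x)" "m * (N * x) \<le> m * (real i + 1)" using x1 m0 by auto
    thus "x \<in> {x. max (m * real i) (real j) \<le> (m * N) * x + 0 \<and> (m * N) * x + 0 \<le> min (m * real i + m) (real j + 1)}"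
      using x1(3,4) unfolding Tx by (auto simp: algebra_simps)
  next
    fix x assume "x \<in> {x. max (m * real i) (real j) \<le> (m * N) * x + 0 \<and> (m * N) * x + 0 \<le> min (m * real i + m) (real j + 1)}"
    hence x1: "m * real i \<le> m * (N * x)" "m * (N * x) \<le> m * (real i + 1)" "real j \<le> m * N * x" "m * N * x \<le> real j + 1"
      by (auto simp: algebra_simps)
    have x2: "real i \<le> N * x" "N * x \<le> real i + 1" using x1(1,2) m0 by auto
    have "x \<le> (real i + 1)/N" using x2(2) Nr by (simp add: field_simps)
    moreover have "(real i + 1)/N \<le> 1/m" using i Nr m0 by (simp add: field_simps)
    ultimately have "x \<le> 1/m" by linarith
    hence Tx: "T x = m * x" by (rule Tl)
    show "x \<in> T -` {real j/N..real (Suc j)/N} \<inter> {real i/N..real (Suc i)/N}"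
      using x2 x1(3,4) Nr by (auto simp: field_simps Tx)
  qed
  hence "Pc N i j = max 0 (min (m * real i + m) (real j + 1) - max (m * real i) (real j)) / \<bar>m * N\<bar>"
    unfolding Pc_def using meas_affine[of "m * N" "max (m * real i) (real j)" 0 "min (m * real i + m) (real j + 1)"] m0 Nr
    by simp
  thus ?thesis using m0 Nr by (simp add: ov_def)
qed

lemma Pc_right:
  assumes N: "N > 0" and iN: "i < N" and i: "real N \<le> m * real i"
  shows "real N * Pc N i j = ov (l * real (N - 1 - i)) (l * real (N - 1 - i) + l) (real j) (real j + 1) / l"
proof -
  have Nr: "real N > 0" using N by simp
  define k where "k = real (N - 1 - i)"
  have k: "k = real N - 1 - real i" using iN unfolding k_def by (simp add: of_nat_diff)
  have cell: "(real i \<le> N * x \<and> N * x \<le> real i + 1) \<longleftrightarrow> (l * k \<le> (- (l * N)) * x + l * N \<and> (- (l * N)) * x + l * N \<le> l * k + l)" for x :: real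
  proof -
    have "(- (l * N)) * x + l * N = l * (N - N * x)" by (simp add: algebra_simps)
    moreover have "l * k \<le> l * (N - N * x) \<longleftrightarrow> N * x \<le> real i + 1" using l0 k by (auto simp: mult_le_cancel_left_pos)
    moreover have "l * (N - N * x) \<le> l * k + l \<longleftrightarrow> real i \<le> N * x"
    proof -
      have "l * k + l = l * (real N - real i)" unfolding k by (simp add: algebra_simps)
      thus ?thesis using l0 by simp
    qed
    ultimately show ?thesis by auto
  qed
  have ge: "x \<ge> 1/m" if "real i \<le> N * x" for x :: real
  proof -
    have "real i / N \<le> x" using that Nr by (simp add: field_simps)
    moreover have "1/m \<le> real i / N" using i Nr m0 by (simp add: field_simps)
    ultimately show ?thesis by linarith
  qed
  have "T -` {real j/N..real (Suc j)/N} \<inter> {real i/N..real (Suc i)/N} =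
      {x. max (l * k) (real j) \<le> (- (l * N)) * x + l * N \<and> (- (l * N)) * x + l * N \<le> min (l * k + l) (real j + 1)}"
  proof (intro set_eqI iffI)
    fix x assume x: "x \<in> T -` {real j/N..real (Suc j)/N} \<inter> {real i/N..real (Suc i)/N}"
    hence x1: "real i \<le> N * x" "N * x \<le> real i + 1" "real j \<le> N * T x" "N * T x \<le> real j + 1"
      using Nr by (auto simp: field_simps)
    have Tx: "T x = l * (1 - x)" by (rule Tr[OF ge[OF x1(1)]])
    have "N * T x = (- (l * N)) * x + l * N" unfolding Tx by (simp add: algebra_simps)
    thus "x \<in> {x. max (l * k) (real j) \<le> (- (l * N)) * x + l * N \<and> (- (l * N)) * x + l * N \<le> min (l * k + l) (real j + 1)}"
      using x1 cell[of x] by auto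
  next
    fix x assume "x \<in> {x. max (l * k) (real j) \<le> (- (l * N)) * x + l * N \<and> (- (l * N)) * x + l * N \<le> min (l * k + l) (real j + 1)}"
    hence x1: "l * k \<le> (- (l * N)) * x + l * N" "(- (l * N)) * x + l * N \<le> l * k + l"
      "real j \<le> (- (l * N)) * x + l * N" "(- (l * N)) * x + l * N \<le> real j + 1" by auto
    have x2: "real i \<le> N * x" "N * x \<le> real i + 1" using x1(1,2) cell[of x] by auto
    have Tx: "T x = l * (1 - x)" by (rule Tr[OF ge[OF x2(1)]])
    have "N * T x = (- (l * N)) * x + l * N" unfolding Tx by (simp add: algebra_simps)
    hence "real j \<le> N * T x" "N * T x \<le> real j + 1" using x1(3,4) by auto
    thus "x \<in> T -` {real j/N..real (Suc j)/N} \<inter> {real i/N..real (Suc i)/N}"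
      using x2 Nr by (auto simp: field_simps)
  qed
  hence "Pc N i j = max 0 (min (l * k + l) (real j + 1) - max (l * k) (real j)) / \<bar>- (l * N)\<bar>"
    unfolding Pc_def using meas_affine[of "- (l * N)" "max (l * k) (real j)" "l * N" "min (l * k + l) (real j + 1)"] l0 Nr
    by simp
  thus ?thesis using l0 Nr by (simp add: ov_def k_def)
qed

lemma Pc_bounds:
  assumes N: "N > 0"
  shows "0 \<le> real N * Pc N i j" "real N * Pc N i j \<le> 1"
proof -
  have Nr: "real N > 0" using N by simp
  show "0 \<le> real N * Pc N i j" unfolding Pc_def by simp
  have cl: "closed (T -` {real j/N..real (Suc j)/N} \<inter> {real i/N..real (Suc i)/N})"
    by (intro closed_Int closed_vimage T_cont) auto
  have "Pc N i j \<le> measure lebesgue {real i/N..real (Suc i)/N}"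
    unfolding Pc_def by (rule measure_mono_fmeasurable) (use closed_leb[OF cl] in auto)
  also have "\<dots> = 1 / N" using Nr by (simp add: field_simps)
  finally show "real N * Pc N i j \<le> 1" using Nr by (simp add: field_simps)
qed

lemma Pc_mid_zero:
  assumes N: "N > 0" and i1: "m * real i < real N" and i2: "real N < m * real (Suc i)"
    and jK: "real j + 1 + m + l \<le> real N"
  shows "Pc N i j = 0"
proof -
  have Nr: "real N > 0" using N by simp
  have "T -` {real j/N..real (Suc j)/N} \<inter> {real i/N..real (Suc i)/N} = {}"
  proof (rule ccontr)
    assume "\<not> ?thesis"
    then obtain x where x: "real i / N \<le> x" "x \<le> real (Suc i) / N" "T x \<le> real (Suc j) / N" by auto
    have a: "m * x > 1 - m / N"
    proof -
      have "m * x \<ge> m * (real i / N)" using x(1) m0 by (intro mult_left_mono) auto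
      moreover have "m * (real i / N) > 1 - m / N"
      proof -
        have "m * real i > real N - m" using i2 by (simp add: algebra_simps)
        hence "(real N - m) / N < (m * real i) / N" using Nr by (rule divide_strict_right_mono)
        thus ?thesis using Nr by (simp add: diff_divide_distrib)
      qed
      ultimately show ?thesis by linarith
    qed
    have b: "l * (1 - x) > 1 - l / N"
    proof -
      have "l * (1 - x) \<ge> l * (1 - real (Suc i) / N)" using x(2) l0 by (intro mult_left_mono) auto
      moreover have "1 - real (Suc i) / N > 1 - 1/m - 1/N"
        using i1 Nr m0 by (simp add: field_simps)
      hence "l * (1 - real (Suc i) / N) > l * (1 - 1/m - 1/N)" using l0 by simp
      moreover have "l * (1 - 1/m - 1/N) = 1 - l/N" using lm by (simp add: algebra_simps)
      ultimately show ?thesis by linarith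
    qed
    have "T x > 1 - (m + l) / N"
    proof -
      have "m / N \<le> (m + l) / N" "l / N \<le> (m+l)/N" using Nr m0 l0 by (simp_all add: divide_right_mono)
      thus ?thesis using a b unfolding T_def by linarith
    qed
    moreover have "real (Suc j) / N \<le> 1 - (m + l) / N"
    proof -
      have "real (Suc j) \<le> real N - (m+l)" using jK by simp
      hence "real (Suc j) / N \<le> (real N - (m+l)) / N" by (rule divide_right_mono) (use Nr in simp)
      thus ?thesis using Nr by (simp add: diff_divide_distrib)
    qed
    ultimately show False using x(3) by linarith
  qed
  thus ?thesis unfolding Pc_def by simp
qed

end


context tent begin

definition aent :: "real \<Rightarrow> nat \<Rightarrow> real" where
  "aent s i = phi (1 - frac (s * real i)) + phi (frac (s * real i + s))"

definition Lc :: "nat \<Rightarrow> nat" where "Lc N = nat \<lfloor>real N / m\<rfloor>"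
definition Mc :: "nat \<Rightarrow> nat" where "Mc N = nat \<lceil>real N / m\<rceil>"
definition Kc :: nat where "Kc = nat \<lceil>m + l\<rceil>"

definition cellsum :: "nat \<Rightarrow> nat \<Rightarrow> real" where
  "cellsum N i = (\<Sum>j<N. (1 / real N) * phi (real N * Pc N i j))"

definition midsum :: "nat \<Rightarrow> real" where
  "midsum N = (\<Sum>i\<in>{Lc N..<Mc N}. cellsum N i)"

lemma LM: "Lc N \<le> Mc N" "Mc N \<le> N" "Mc N \<le> Lc N + 1"
proof -
  have "real N * 1 \<le> real N * m" using m1 by (intro mult_left_mono) auto
  hence "real N / m \<le> real N" using m0 by (simp add: divide_le_eq)
  thus "Mc N \<le> N" unfolding Mc_def by (simp add: nat_le_iff ceiling_le_iff)
  show "Lc N \<le> Mc N" unfolding Lc_def Mc_def by (simp add: nat_mono le_of_int_ceiling floor_le_ceiling)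
  have "\<lceil>real N / m\<rceil> \<le> \<lfloor>real N / m\<rfloor> + 1" by (simp add: ceiling_le_iff)
  thus "Mc N \<le> Lc N + 1" unfolding Lc_def Mc_def using m0 by (simp add: nat_le_iff)
qed

lemma cell_left:
  assumes N: "N > 0" and i: "i < Lc N"
  shows "cellsum N i = (ln m + aent m i / m) / N"
proof -
  have "real (Suc i) \<le> real N / m" using i unfolding Lc_def by linarith
  hence i': "real (Suc i) * m \<le> real N" using m0 by (simp add: field_simps)
  have "cellsum N i = (1 / real N) * (\<Sum>j<N. phi (ov (m * real i) (m * real i + m) (real j) (real j + 1) / m))"
    unfolding cellsum_def by (simp add: Pc_left[OF N i'] sum_distrib_left)
  also have "(\<Sum>j<N. phi (ov (m * real i) (m * real i + m) (real j) (real j + 1) / m)) = ln m + aent m i / m"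
    unfolding aent_def by (rule cell_ent[OF m1]) (use m0 i' in \<open>auto simp: algebra_simps\<close>)
  finally show ?thesis by simp
qed

lemma cell_right:
  assumes N: "N > 0" and i1: "Mc N \<le> i" and i2: "i < N"
  shows "cellsum N i = (ln l + aent l (N - 1 - i) / l) / N"
proof -
  have "real N / m \<le> real i" using i1 unfolding Mc_def by linarith
  hence i': "real N \<le> m * real i" using m0 by (simp add: field_simps)
  have ki: "real (N - 1 - i) = real N - 1 - real i" using i2 by (simp add: of_nat_diff)
  have bnd: "l * real (N - 1 - i) + l \<le> real N"
  proof -
    have "l * real (N - 1 - i) + l = l * (real N - real i)" unfolding ki by (simp add: algebra_simps)
    also have "\<dots> \<le> l * (real N - real N / m)" using \<open>real N / m \<le> real i\<close> l0 by (intro mult_left_mono) auto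
    also have "\<dots> = real N * (l * (1 - 1/m))" by (simp add: algebra_simps)
    also have "\<dots> = real N" using lm by simp
    finally show ?thesis .
  qed
  have "cellsum N i = (1 / real N) * (\<Sum>j<N. phi (ov (l * real (N - 1 - i)) (l * real (N - 1 - i) + l) (real j) (real j + 1) / l))"
    unfolding cellsum_def by (simp add: Pc_right[OF N i2 i'] sum_distrib_left)
  also have "(\<Sum>j<N. phi (ov (l * real (N - 1 - i)) (l * real (N - 1 - i) + l) (real j) (real j + 1) / l)) = ln l + aent l (N - 1 - i) / l"
    unfolding aent_def by (rule cell_ent[OF l1]) (use l0 bnd in auto)
  finally show ?thesis by simp
qed

lemma cell_mid:
  assumes N: "N > 0" and i1: "Lc N \<le> i" and i2: "i < Mc N"
  shows "0 \<le> cellsum N i" "cellsum N i \<le> (Kc + 1) / N"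
proof -
  have Nr: "real N > 0" using N by simp
  have iN: "i < N" using i2 LM by (meson less_le_trans)
  have a: "real N / m < real i + 1" using i1 unfolding Lc_def by linarith
  have b: "real i < real N / m" using i2 unfolding Mc_def by linarith
  have im1: "m * real i < real N" using b m0 by (simp add: field_simps)
  have im2: "real N < m * real (Suc i)" using a m0 by (simp add: field_simps)
  have bnd: "0 \<le> real N * Pc N i j" "real N * Pc N i j \<le> 1" for j using Pc_bounds[OF N] by auto
  show "0 \<le> cellsum N i" unfolding cellsum_def using bnd phi_ge0 Nr by (intro sum_nonneg mult_nonneg_nonneg) auto
  have Km: "m + l \<le> real Kc" unfolding Kc_def by linarith
  have z: "phi (real N * Pc N i j) = 0" if "j < N - (Kc + 1)" for j
  proof -
    have "real j + 1 + m + l \<le> real N" using that Km by linarith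
    thus ?thesis using Pc_mid_zero[OF N im1 im2] by simp
  qed
  have "(\<Sum>j<N. phi (real N * Pc N i j)) = (\<Sum>j\<in>{0..<N - (Kc+1)}. phi (real N * Pc N i j)) + (\<Sum>j\<in>{N - (Kc+1)..<N}. phi (real N * Pc N i j))"
    by (simp add: sum.atLeastLessThan_concat atLeast0LessThan[symmetric])
  also have "(\<Sum>j\<in>{0..<N - (Kc+1)}. phi (real N * Pc N i j)) = 0" using z by simp
  also have "(\<Sum>j\<in>{N - (Kc+1)..<N}. phi (real N * Pc N i j)) \<le> of_nat (card {N - (Kc+1)..<N}) * 1"
    by (rule sum_bounded_above) (use phi_le1 bnd in auto)
  also have "of_nat (card {N - (Kc+1)..<N}) * 1 \<le> real (Kc + 1)" by simp
  finally have "(\<Sum>j<N. phi (real N * Pc N i j)) \<le> real (Kc + 1)" by simp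
  hence "(1 / real N) * (\<Sum>j<N. phi (real N * Pc N i j)) \<le> (1 / real N) * real (Kc + 1)"
    using Nr by (intro mult_left_mono) auto
  thus "cellsum N i \<le> (Kc + 1) / N" unfolding cellsum_def by (simp add: sum_distrib_left)
qed

lemma mid_bounds:
  assumes N: "N > 0"
  shows "0 \<le> midsum N" "midsum N \<le> (Kc + 1) / N"
proof -
  show "0 \<le> midsum N" unfolding midsum_def using cell_mid[OF N] by (intro sum_nonneg) auto
  have "midsum N \<le> of_nat (card {Lc N..<Mc N}) * ((Kc + 1) / N)"
    unfolding midsum_def by (rule sum_bounded_above) (use cell_mid[OF N] in auto)
  also have "\<dots> \<le> 1 * ((Kc + 1) / N)" using LM[of N] by (intro mult_right_mono) auto
  finally show "midsum N \<le> (Kc + 1) / N" by simp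
qed

lemma Hstd_decomp:
  assumes N: "N > 0"
  shows "Hstd N = (\<Sum>i<Lc N. (ln m + aent m i / m)) / N + (\<Sum>k<N - Mc N. (ln l + aent l k / l)) / N + midsum N"
proof -
  have "Hstd N = (\<Sum>i\<in>{0..<N}. cellsum N i)" unfolding Hstd_def cellsum_def by (simp add: atLeast0LessThan)
  also have "\<dots> = (\<Sum>i\<in>{0..<Lc N}. cellsum N i) + (\<Sum>i\<in>{Lc N..<Mc N}. cellsum N i) + (\<Sum>i\<in>{Mc N..<N}. cellsum N i)"
    using LM[of N] by (simp add: sum.atLeastLessThan_concat)
  also have "(\<Sum>i\<in>{0..<Lc N}. cellsum N i) = (\<Sum>i<Lc N. (ln m + aent m i / m)) / N"
    by (simp add: atLeast0LessThan cell_left[OF N] sum_divide_distrib)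
  also have "(\<Sum>i\<in>{Mc N..<N}. cellsum N i) = (\<Sum>i\<in>{Mc N..<N}. (ln l + aent l (N - 1 - i) / l) / N)"
    by (rule sum.cong[OF refl]) (use cell_right[OF N] in auto)
  also have "\<dots> = (\<Sum>k<N - Mc N. (ln l + aent l k / l) / N)"
    by (rule sum.reindex_bij_witness[where i="\<lambda>k. N - 1 - k" and j="\<lambda>i. N - 1 - i"]) auto
  also have "\<dots> = (\<Sum>k<N - Mc N. (ln l + aent l k / l)) / N" by (simp add: sum_divide_distrib)
  finally show ?thesis unfolding midsum_def by simp
qed

end


lemma lim_by_bound:
  fixes x :: "nat \<Rightarrow> real"
  assumes "\<And>N. N \<ge> 1 \<Longrightarrow> \<bar>x N - c\<bar> \<le> C / real N"
  shows "x \<longlonglongrightarrow> c"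
proof -
  have "(\<lambda>N. C / real N) \<longlonglongrightarrow> 0" by (rule lim_const_over_n)
  moreover have "eventually (\<lambda>N. norm (x N - c) \<le> C / real N) sequentially"
    using assms by (auto simp: eventually_sequentially)
  ultimately have "(\<lambda>N. x N - c) \<longlonglongrightarrow> 0" by (intro Lim_null_comparison[of "\<lambda>N. x N - c" "\<lambda>N. C / real N"])
  thus ?thesis by (rule LIM_zero_cancel)
qed

lemma avg_form:
  fixes a :: "nat \<Rightarrow> real"
  assumes "s \<noteq> 0"
  shows "(\<Sum>i<L. (c + a i / s)) / real N = (real L / real N) * (c + ((\<Sum>i<L. a i) / real L) / s)"
proof (cases "L = 0")
  case False
  define S where "S = (\<Sum>i<L. a i)"
  have 1: "(\<Sum>i<L. (c + a i / s)) = real L * c + S / s" unfolding S_def by (simp add: sum.distrib sum_divide_distrib)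
  have 2: "real L * ((S / real L) / s) = S / s" using False by simp
  have "(real L / real N) * (c + (S / real L) / s) = (real L * c + real L * ((S / real L) / s)) / real N"
    by (simp only: times_divide_eq_left distrib_left add_divide_distrib)
  also have "\<dots> = (real L * c + S / s) / real N" by (simp only: 2)
  finally have 4: "(real L / real N) * (c + (S / real L) / s) = (real L * c + S / s) / real N" .
  have 3: "(\<Sum>i<L. (c + a i / s)) / real N = (real L * c + S / s) / real N" by (simp only: 1)
  show ?thesis unfolding S_def[symmetric] by (simp only: 3 4)
qed simp

context tent begin

lemma Lc_lim: "(\<lambda>N. real (Lc N) / real N) \<longlonglongrightarrow> 1/m"
proof (rule lim_by_bound[where C=1])
  fix N :: nat assume N: "N \<ge> 1"
  hence Nr: "real N > 0" by simp
  have f0: "\<lfloor>real N / m\<rfloor> \<ge> 0" using m0 by simp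
  have fl: "real (Lc N) = of_int \<lfloor>real N / m\<rfloor>" unfolding Lc_def using f0 by simp
  have a: "real (Lc N) \<le> real N / m" "real N / m - 1 < real (Lc N)" unfolding fl by linarith+
  have "real (Lc N) / N \<le> 1/m" using a(1) Nr m0 by (simp add: field_simps)
  moreover have "1/m - 1/N < real (Lc N) / N"
  proof -
    have "(real N / m - 1) / N < real (Lc N) / N" using a(2) Nr by (rule divide_strict_right_mono)
    thus ?thesis using Nr by (simp add: diff_divide_distrib)
  qed
  ultimately show "\<bar>real (Lc N) / real N - 1/m\<bar> \<le> 1 / real N" by linarith
qed

lemma Rc_lim: "(\<lambda>N. real (N - Mc N) / real N) \<longlonglongrightarrow> 1/l"
proof (rule lim_by_bound[where C=1])
  fix N :: nat assume N: "N \<ge> 1"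
  hence Nr: "real N > 0" by simp
  have r: "real (N - Mc N) = real N - real (Mc N)" using LM(2)[of N] by (simp add: of_nat_diff)
  have x0: "-1 < real N / m" using m0 by (smt (verit, ccfv_threshold) divide_nonneg_pos of_nat_0_le_iff)
      have f0: "\<lceil>real N / m\<rceil> \<ge> 0" using x0 by simp
  have fl: "real (Mc N) = of_int \<lceil>real N / m\<rceil>" unfolding Mc_def using f0 by simp
  have a: "real N / m \<le> real (Mc N)" "real (Mc N) < real N / m + 1" unfolding fl by linarith+
  have il: "1/l = 1 - 1/m" using ml by simp
  have "real (N - Mc N) / N \<le> 1 - 1/m"
  proof -
    have "real (N - Mc N) / N \<le> (real N - real N / m) / N" unfolding r using a(1) Nr by (intro divide_right_mono) auto
    thus ?thesis using Nr by (simp add: diff_divide_distrib)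
  qed
  moreover have "1 - 1/m - 1/N < real (N - Mc N) / N"
  proof -
    have "(real N - real N / m - 1) / N < real (N - Mc N) / N" unfolding r using a(2) Nr by (intro divide_strict_right_mono) auto
    thus ?thesis using Nr by (simp add: diff_divide_distrib)
  qed
  ultimately show "\<bar>real (N - Mc N) / real N - 1/l\<bar> \<le> 1 / real N" unfolding il by linarith
qed

lemma Lc_top: "filterlim Lc at_top sequentially"
  unfolding filterlim_at_top
proof
  fix Z :: nat
  show "eventually (\<lambda>N. Z \<le> Lc N) sequentially"
    unfolding eventually_sequentially
  proof (intro exI allI impI)
    fix N assume N: "nat \<lceil>m * (real Z + 1)\<rceil> \<le> N"
    hence "m * (real Z + 1) \<le> real N" by linarith
    hence "real Z + 1 \<le> real N / m" using m0 by (simp add: field_simps)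
    thus "Z \<le> Lc N" unfolding Lc_def by linarith
  qed
qed

lemma Rc_top: "filterlim (\<lambda>N. N - Mc N) at_top sequentially"
  unfolding filterlim_at_top
proof
  fix Z :: nat
  show "eventually (\<lambda>N. Z \<le> N - Mc N) sequentially"
    unfolding eventually_sequentially
  proof (intro exI allI impI)
    fix N assume N: "nat \<lceil>l * (real Z + 2)\<rceil> \<le> N"
    hence "l * (real Z + 2) \<le> real N" by linarith
    hence z: "real Z + 2 \<le> real N / l" using l0 by (simp add: field_simps)
    have il: "1/l = 1 - 1/m" using ml by simp
    have "real N / l = real N * (1/l)" by simp
    also have "\<dots> = real N - real N / m" unfolding il by (simp add: algebra_simps)
    finally have "real N / l = real N - real N / m" .
    moreover have "real (Mc N) < real N / m + 1"
    proof -
      have x0: "-1 < real N / m" using m0 by (smt (verit, ccfv_threshold) divide_nonneg_pos of_nat_0_le_iff)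
      have f0: "\<lceil>real N / m\<rceil> \<ge> 0" using x0 by simp
      have fl: "real (Mc N) = of_int \<lceil>real N / m\<rceil>" unfolding Mc_def using f0 by simp
      show ?thesis unfolding fl by linarith
    qed
    ultimately have "real Z + 1 < real N - real (Mc N)" using z by linarith
    thus "Z \<le> N - Mc N" by linarith
  qed
qed

lemma mid_lim: "midsum \<longlonglongrightarrow> 0"
proof (rule lim_by_bound[where C="Kc + 1"])
  fix N :: nat assume "N \<ge> 1"
  hence "N > 0" by simp
  thus "\<bar>midsum N - 0\<bar> \<le> real (Kc + 1) / real N" using mid_bounds[of N] by simp
qed

lemma Hstd_lim:
  assumes cm: "(\<lambda>n. (\<Sum>i<n. aent m i) / real n) \<longlonglongrightarrow> c1"
    and cl: "(\<lambda>n. (\<Sum>i<n. aent l i) / real n) \<longlonglongrightarrow> c2"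
  shows "Hstd \<longlonglongrightarrow> (1/m) * (ln m + c1/m) + (1/l) * (ln l + c2/l)"
proof -
  have e: "Hstd N = (real (Lc N) / N) * (ln m + ((\<Sum>i<Lc N. aent m i) / real (Lc N)) / m)
     + (real (N - Mc N) / N) * (ln l + ((\<Sum>i<N - Mc N. aent l i) / real (N - Mc N)) / l) + midsum N" if "N > 0" for N
    using Hstd_decomp[OF that] avg_form m0 l0 by simp
  have c1': "(\<lambda>N. (\<Sum>i<Lc N. aent m i) / real (Lc N)) \<longlonglongrightarrow> c1"
    by (rule filterlim_compose[OF cm Lc_top])
  have c2': "(\<lambda>N. (\<Sum>i<N - Mc N. aent l i) / real (N - Mc N)) \<longlonglongrightarrow> c2"
    by (rule filterlim_compose[OF cl Rc_top])
  have "(\<lambda>N. (real (Lc N) / N) * (ln m + ((\<Sum>i<Lc N. aent m i) / real (Lc N)) / m)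
     + (real (N - Mc N) / N) * (ln l + ((\<Sum>i<N - Mc N. aent l i) / real (N - Mc N)) / l) + midsum N)
     \<longlonglongrightarrow> (1/m) * (ln m + c1/m) + (1/l) * (ln l + c2/l) + 0"
  proof -
    have t1: "(\<lambda>N. ln m + ((\<Sum>i<Lc N. aent m i) / real (Lc N)) / m) \<longlonglongrightarrow> ln m + c1/m"
      by (intro tendsto_add tendsto_const tendsto_divide c1') (use m0 in auto)
    have t2: "(\<lambda>N. ln l + ((\<Sum>i<N - Mc N. aent l i) / real (N - Mc N)) / l) \<longlonglongrightarrow> ln l + c2/l"
      by (intro tendsto_add tendsto_const tendsto_divide c2') (use l0 in auto)
    show ?thesis by (intro tendsto_add tendsto_mult[OF Lc_lim t1] tendsto_mult[OF Rc_lim t2] mid_lim)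
  qed
  hence "(\<lambda>N. (real (Lc N) / N) * (ln m + ((\<Sum>i<Lc N. aent m i) / real (Lc N)) / m)
     + (real (N - Mc N) / N) * (ln l + ((\<Sum>i<N - Mc N. aent l i) / real (N - Mc N)) / l) + midsum N)
     \<longlonglongrightarrow> (1/m) * (ln m + c1/m) + (1/l) * (ln l + c2/l)" by simp
  moreover have "eventually (\<lambda>N. (real (Lc N) / N) * (ln m + ((\<Sum>i<Lc N. aent m i) / real (Lc N)) / m)
     + (real (N - Mc N) / N) * (ln l + ((\<Sum>i<N - Mc N. aent l i) / real (N - Mc N)) / l) + midsum N = Hstd N) sequentially"
    using e by (auto simp: eventually_sequentially intro!: exI[of _ 1])
  ultimately show ?thesis by (rule Lim_transform_eventually)
qed

end


context tent begin

lemma deriv_T: "deriv T x = (if x < 1/m then m else - l)" if "x \<noteq> 1/m"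
proof (cases "x < 1/m")
  case True
  have ev: "eventually (\<lambda>y. T y = m * y) (nhds x)"
  proof -
    have "eventually (\<lambda>y. y \<in> {..<1/m}) (nhds x)" using True by (intro eventually_nhds_in_open) auto
    thus ?thesis by eventually_elim (simp add: Tl)
  qed
  have "((\<lambda>y. m * y) has_real_derivative m) (at x)" by (auto intro!: derivative_eq_intros)
  hence "(T has_real_derivative m) (at x)" using DERIV_cong_ev[OF refl ev refl] by simp
  thus ?thesis using True by (simp add: DERIV_imp_deriv)
next
  case False
  hence x: "x > 1/m" using that by simp
  have ev: "eventually (\<lambda>y. T y = l * (1 - y)) (nhds x)"
  proof -
    have "eventually (\<lambda>y. y \<in> {1/m<..}) (nhds x)" using x by (intro eventually_nhds_in_open) auto
    thus ?thesis by eventually_elim (simp add: Tr)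
  qed
  have "((\<lambda>y. l * (1 - y)) has_real_derivative (l * (0 - 1))) (at x)" by (auto intro!: derivative_eq_intros)
  hence "(T has_real_derivative (- l)) (at x)" using DERIV_cong_ev[OF refl ev refl] by simp
  thus ?thesis using False by (simp add: DERIV_imp_deriv)
qed

lemma lyap_T: "lyap T = (1/m) * ln m + (1/l) * ln l"
proof -
  define h where "h x = (if x \<le> 1/m then ln m else ln l)" for x
  have mi: "0 \<le> 1/m" "1/m \<le> 1" using m1 by auto
  have "integral {0..1} (\<lambda>x. ln \<bar>deriv T x\<bar>) = integral {0..1} h"
  proof (rule integral_spike[of "{1/m}"])
    fix x assume "x \<in> {0..1} - {1/m}"
    thus "h x = ln \<bar>deriv T x\<bar>" using deriv_T[of x] m0 l0 by (auto simp: h_def)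
  qed auto
  moreover have "(h has_integral ((1/m) * ln m + (1/l) * ln l)) {0..1}"
  proof -
    have a: "(h has_integral ((1/m) * ln m)) {0..1/m}"
    proof (rule has_integral_spike_finite[of "{}"])
      show "((\<lambda>x. ln m) has_integral ((1/m) * ln m)) {0..1/m}"
        using has_integral_const_real[of "ln m" 0 "1/m"] mi by simp
    qed (auto simp: h_def)
    have b: "(h has_integral ((1/l) * ln l)) {1/m..1}"
    proof (rule has_integral_spike_finite[of "{1/m}"])
      have "Henstock_Kurzweil_Integration.content {1/m..1} = 1/l" using ml mi by simp
      thus "((\<lambda>x. ln l) has_integral ((1/l) * ln l)) {1/m..1}"
        using has_integral_const_real[of "ln l" "1/m" 1] by simp
    qed (auto simp: h_def)
    show ?thesis using has_integral_combine[OF mi a b] by simp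
  qed
  ultimately show ?thesis unfolding lyap_def by (simp add: integral_unique)
qed

lemma H_limit_T:
  assumes cm: "(\<lambda>n. (\<Sum>i<n. aent m i) / real n) \<longlonglongrightarrow> c1"
    and cl: "(\<lambda>n. (\<Sum>i<n. aent l i) / real n) \<longlonglongrightarrow> c2"
  shows "H_limit T ((1/m) * (ln m + c1/m) + (1/l) * (ln l + c2/l))"
  unfolding H_limit_def
proof (intro allI impI)
  fix \<Delta> :: "nat \<Rightarrow> nat \<Rightarrow> real set"
  assume ep: "\<forall>N\<ge>1. equivolume_partition N (\<Delta> N)"
  have ev: "eventually (\<lambda>N. Hstd N = H_part N (\<Delta> N) T) sequentially"
    unfolding eventually_sequentially
  proof (intro exI[of _ 1] allI impI)
    fix N :: nat assume N: "1 \<le> N"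
    have "equivolume_partition N (\<Delta> N)" using ep N by blast
    thus "Hstd N = H_part N (\<Delta> N) T" using H_part_std[of N "\<Delta> N"] N by simp
  qed
  show "(\<lambda>N. H_part N (\<Delta> N) T) \<longlonglongrightarrow> (1/m) * (ln m + c1/m) + (1/l) * (ln l + c2/l)"
    by (rule Lim_transform_eventually[OF Hstd_lim[OF cm cl] ev])
qed

lemma aent_split: "(\<Sum>i<n. aent s i) / real n = (\<Sum>i<n. phi (1 - frac (s * real i + 0))) / real n + (\<Sum>i<n. phi (frac (s * real i + s))) / real n"
  unfolding aent_def by (simp add: sum.distrib add_divide_distrib)

lemma cesaro_irr:
  assumes irr: "s \<notin> \<rat>"
  shows "(\<lambda>n. (\<Sum>i<n. aent s i) / real n) \<longlonglongrightarrow> 1/2"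
proof -
  have a: "(\<lambda>n. (\<Sum>i<n. phi (1 - frac (s * real i + 0))) / real n) \<longlonglongrightarrow> 1/4"
    using weyl[OF cont_phi1 _ irr, of 0] int_phi1 by simp
  have b: "(\<lambda>n. (\<Sum>i<n. phi (frac (s * real i + s))) / real n) \<longlonglongrightarrow> 1/4"
    using weyl[OF cont_phi _ irr, of s] int_phi by simp
  show ?thesis unfolding aent_split using tendsto_add[OF a b] by simp
qed

end


lemma frac_nat_add: "frac (real n + y) = frac y"
  by (metis frac_add_of_int_left of_int_of_nat_eq)

lemma sum_phi1: assumes "p \<ge> 1"
  shows "(\<Sum>j<p. phi (1 - real j / real p)) = (\<Sum>k=1..<p. phi (real k / real p))"
proof -
  have pr: "real p > 0" using assms by simp
  have "(\<Sum>j<p. phi (1 - real j / real p)) = (\<Sum>k\<in>{1..p}. phi (real k / real p))"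
  proof (rule sum.reindex_bij_witness[where i="\<lambda>k. p - k" and j="\<lambda>j. p - j"])
    fix k assume k: "k \<in> {..<p}"
    have "real (p - k) = real p - real k" using k by (simp add: of_nat_diff)
    thus "phi (real (p - k) / real p) = phi (1 - real k / real p)" using pr by (simp add: field_simps)
  qed auto
  also have "\<dots> = (\<Sum>k\<in>{1..<p}. phi (real k / real p)) + phi (real p / real p)"
    using assms by (simp add: atLeastLessThanSuc_atLeastAtMost[symmetric])
  also have "\<dots> = (\<Sum>k\<in>{1..<p}. phi (real k / real p))" using pr by simp
  finally show ?thesis .
qed

lemma sum_phi0: assumes "p \<ge> 1"
  shows "(\<Sum>j<p. phi (real j / real p)) = (\<Sum>k=1..<p. phi (real k / real p))"
proof -
  have "(\<Sum>j<p. phi (real j / real p)) = (\<Sum>j\<in>{0..<p}. phi (real j / real p))" by (simp add: atLeast0LessThan)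
  also have "\<dots> = phi (real 0 / real p) + (\<Sum>j\<in>{Suc 0..<p}. phi (real j / real p))"
    using assms by (intro sum.atLeast_Suc_lessThan) simp
  finally show ?thesis by simp
qed

context tent begin

lemma cesaro_rat:
  fixes p q :: nat
  assumes p: "p \<ge> 1" and cop: "coprime p q" and s: "s = real (p + q) / real p"
  shows "(\<lambda>n. (\<Sum>i<n. aent s i) / real n) \<longlonglongrightarrow> 2 * (\<Sum>k=1..<p. phi (real k / real p)) / real p"
proof -
  have pr: "real p > 0" using p by simp
  have cop': "coprime (int q) (int p)" using cop by (simp add: coprime_commute)
  have e1: "frac (s * real i + 0) = frac (real_of_int (int q * int i + 0) / real p)" for i
  proof -
    have "s * real i + 0 = real i + real_of_int (int q * int i + 0) / real p" using pr unfolding s by (simp add: field_simps)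
    thus ?thesis by (simp only: frac_nat_add)
  qed
  have e2: "frac (s * real i + s) = frac (real_of_int (int q * int i + int q) / real p)" for i
  proof -
    have "s * real i + s = real (Suc i) + real_of_int (int q * int i + int q) / real p" using pr unfolding s by (simp add: field_simps)
    thus ?thesis by (simp only: frac_nat_add)
  qed
  have a: "(\<lambda>n. (\<Sum>i<n. phi (1 - frac (s * real i + 0))) / real n) \<longlonglongrightarrow> (\<Sum>j<p. phi (1 - real j / real p)) / p"
    unfolding e1 using rat_cesaro[OF cont_phi1 _ cop', of 0] p by simp
  have b: "(\<lambda>n. (\<Sum>i<n. phi (frac (s * real i + s))) / real n) \<longlonglongrightarrow> (\<Sum>j<p. phi (real j / real p)) / p"
    unfolding e2 using rat_cesaro[OF cont_phi _ cop', of "int q"] p by simp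
  have "(\<lambda>n. (\<Sum>i<n. aent s i) / real n) \<longlonglongrightarrow> (\<Sum>j<p. phi (1 - real j / real p)) / p + (\<Sum>j<p. phi (real j / real p)) / p"
    unfolding aent_split using tendsto_add[OF a b] .
  thus ?thesis unfolding sum_phi1[OF p] sum_phi0[OF p] by (simp add: add_divide_distrib)
qed

end

theorem mainTheorem6:
  fixes m l :: real
  assumes "m > 1" and "l > 1" and "1 / m + 1 / l = 1"
  defines "f \<equiv> (\<lambda>x. if x \<le> 1 / m then m * x else l * (1 - x))"
  shows "lyap f = (1 / m) * ln m + (1 / l) * ln l
    \<and> (m = 2 \<longrightarrow> H_limit f (lyap f + 0))
    \<and> (\<forall>p q :: nat. m \<in> \<rat> \<and> m \<noteq> 2 \<and> p \<ge> 1 \<and> q \<ge> 1 \<and> coprime p q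
           \<and> m = real (p + q) / real p \<longrightarrow>
           H_limit f (lyap f +
             ((2 * real p / (real (p + q))\<^sup>2) * (\<Sum>n=1..<p. phi (real n / real p))
            + (2 * real q / (real (p + q))\<^sup>2) * (\<Sum>n=1..<q. phi (real n / real q)))))
    \<and> (m \<notin> \<rat> \<longrightarrow> H_limit f (lyap f + (m\<^sup>2 - 2 * m + 2) / (2 * m\<^sup>2)))"
proof -
  interpret tent m l using assms(1-3) by unfold_locales
  have fT: "f = T" unfolding f_def using T_eq by simp
  have ly: "lyap f = (1 / m) * ln m + (1 / l) * ln l" unfolding fT by (rule lyap_T)
  have il: "1/l = 1 - 1/m" using ml by simp
  have RAT: "H_limit f (lyap f +
             ((2 * real p / (real (p + q))\<^sup>2) * (\<Sum>n=1..<p. phi (real n / real p))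
            + (2 * real q / (real (p + q))\<^sup>2) * (\<Sum>n=1..<q. phi (real n / real q))))"
    if p: "p \<ge> 1" and q: "q \<ge> 1" and cop: "coprime p q" and mpq: "m = real (p + q) / real p" for p q :: nat
  proof -
    have pr: "real p > 0" and qr: "real q > 0" using p q by auto
    have lpq: "l = real (p + q) / real q"
    proof -
      have "1/l = real q / real (p + q)" using il pr qr unfolding mpq by (simp add: field_simps)
      hence "1 / (1/l) = 1 / (real q / real (p + q))" by simp
      thus ?thesis by simp
    qed
    define Sp where "Sp = (\<Sum>n=1..<p. phi (real n / real p))"
    define Sq where "Sq = (\<Sum>n=1..<q. phi (real n / real q))"
    have cm: "(\<lambda>n. (\<Sum>i<n. aent m i) / real n) \<longlonglongrightarrow> 2 * Sp / real p"
      unfolding Sp_def by (rule cesaro_rat[OF p cop mpq])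
    have cl: "(\<lambda>n. (\<Sum>i<n. aent l i) / real n) \<longlonglongrightarrow> 2 * Sq / real q"
      unfolding Sq_def by (rule cesaro_rat[OF q _ ]) (use cop lpq in \<open>auto simp: coprime_commute add.commute\<close>)
    have H: "H_limit T ((1/m) * (ln m + (2 * Sp / real p)/m) + (1/l) * (ln l + (2 * Sq / real q)/l))"
      by (rule H_limit_T[OF cm cl])
    have "(1/m) * (ln m + (2 * Sp / real p)/m) + (1/l) * (ln l + (2 * Sq / real q)/l)
        = lyap f + ((2 * real p / (real (p + q))\<^sup>2) * Sp + (2 * real q / (real (p + q))\<^sup>2) * Sq)"
    proof -
      have e1: "(2 * Sp / real p)/m * (1/m) = (2 * real p / (real (p + q))\<^sup>2) * Sp"
        unfolding mpq using pr qr by (simp add: field_simps power2_eq_square)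
      have e2: "(2 * Sq / real q)/l * (1/l) = (2 * real q / (real (p + q))\<^sup>2) * Sq"
        unfolding lpq using pr qr by (simp add: field_simps power2_eq_square)
      have "(1/m) * (ln m + (2 * Sp / real p)/m) + (1/l) * (ln l + (2 * Sq / real q)/l)
          = ((1 / m) * ln m + (1 / l) * ln l) + ((2 * Sp / real p)/m * (1/m) + (2 * Sq / real q)/l * (1/l))"
        by (simp add: algebra_simps)
      thus ?thesis unfolding ly e1 e2 .
    qed
    thus ?thesis using H fT Sp_def Sq_def by simp
  qed
  have two: "m = 2 \<longrightarrow> H_limit f (lyap f + 0)"
  proof
    assume "m = 2"
    hence "m = real (1 + 1) / real 1" by simp
    from RAT[of 1 1, OF _ _ _ this] show "H_limit f (lyap f + 0)" by simp
  qed
  have irr: "H_limit f (lyap f + (m\<^sup>2 - 2 * m + 2) / (2 * m\<^sup>2))" if mi: "m \<notin> \<rat>"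
  proof -
    have li: "l \<notin> \<rat>"
    proof
      assume "l \<in> \<rat>"
      hence "1 - 1/l \<in> \<rat>" by (intro Rats_diff Rats_divide) auto
      hence "1/m \<in> \<rat>" using il by simp
      hence "1/(1/m) \<in> \<rat>" by (rule Rats_divide[OF Rats_1])
      thus False using mi by simp
    qed
    have H: "H_limit T ((1/m) * (ln m + (1/2)/m) + (1/l) * (ln l + (1/2)/l))"
      by (rule H_limit_T[OF cesaro_irr[OF mi] cesaro_irr[OF li]])
    have "(1/m) * (ln m + (1/2)/m) + (1/l) * (ln l + (1/2)/l) = lyap f + (1/m)^2/2 + (1/l)^2/2"
      unfolding ly using m0 l0 by (simp add: field_simps power2_eq_square)
    also have "\<dots> = lyap f + (m\<^sup>2 - 2 * m + 2) / (2 * m\<^sup>2)"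
      unfolding il using m0 by (simp add: field_simps power2_eq_square)
    finally show ?thesis using H fT by simp
  qed
  show ?thesis using ly two RAT irr by blast
qed


end
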